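(* Under the assumptions and notation of the context, there exist a neighborhood $\mathcal U$ of $(0,0)$ and $C>0$ such that on $\mathcal U\cap\{t>0\}$ the entries of $\mathcal A=(\tilde a_{ij})$ and of $\partial_x\mathcal A$ satisfy (with $|O(g)|\le C g$ entrywise) \[ \mathcal A=\begin{bmatrix}O(\sqrt a)&O(1)&O(\sqrt a)\\O(a)&O(\sqrt a)&O(1)\\O(a^{3/2})&O(a)&O(a^{5/2})\end{bmatrix},\qquad \partial_x\mathcal A=\begin{bmatrix}O(1)&O(1/\sqrt a)&O(1)\\O(\sqrt a)&O(1)&O(1/\sqrt a)\\O(a)&O(\sqrt a)&O(\sqrt a)\end{bmatrix}. \]
   Context: Let $W\subset\mathbb R$ be an open interval containing $0$, $c,T>0$, and let $a(t,x),b(t,x)$ be real-valued $C^\infty$ functions on $(-c,T)\times W$ with bounded derivatives of all orders. Assume $\Delta:=4a^3-27b^2\ge0$ on $[0,T)\times W$, $a(0,0)=0$, and $a>0$ on $(0,T)\times W$. Let $S=\begin{bmatrix}3&0&-a\\0&2a&3b\\-a&3b&a^2\end{bmatrix}$, $A=\begin{bmatrix}0&a&b\\1&0&0\\0&1&0\end{bmatrix}$, and let $\lambda_1<\lambda_2<\lambda_3$ be the eigenvalues of $S$ on $\mathcal U\cap\{t>0\}$ for a small neighborhood $\mathcal U$ of $(0,0)$. Define vectors $\ell_j=(\ell_{1j},\ell_{2j},\ell_{3j})^t$ by $\ell_1=\big(a(2a-\lambda_1),\ 3b(\lambda_1-3),\ (\lambda_1-3)(\lambda_1-2a)\big)^t$,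 $\ell_2=\big(-3ab,\ (\lambda_2-3)(\lambda_2-a^2)-a^2,\ 3b(\lambda_2-3)\big)^t$, $\ell_3=\big((\lambda_3-2a)(\lambda_3-a^2)-9b^2,\ -3ab,\ -a(\lambda_3-2a)\big)^t$ (eigenvectors of $S$ for $\lambda_1,\lambda_2,\lambda_3$), let $\mathbf t_j=\ell_j/|\ell_j|$, and let $T=(\mathbf t_1,\mathbf t_2,\mathbf t_3)$, an orthogonal matrix with $T^{-1}ST=\mathrm{diag}(\lambda_1,\lambda_2,\lambda_3)$. Set $\mathcal A=T^{-1}AT$. *)

theory Defs
  imports "HOL-Analysis.Analysis"
begin

text \<open>Smoothness with bounded derivatives of
all orders on an open set D: f is continuous and bounded on D, and both first-order
partial derivatives exist at every point of D and are again of this kind (coinductively,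
so all partial derivatives of all orders exist, are continuous, and are bounded on D).\<close>

coinductive smooth_bdd :: "(real \<times> real) set \<Rightarrow> (real \<Rightarrow> real \<Rightarrow> real) \<Rightarrow> bool"
  for D where
  "\<lbrakk> continuous_on D (\<lambda>p. f (fst p) (snd p));
     \<exists>B. \<forall>p\<in>D. \<bar>f (fst p) (snd p)\<bar> \<le> B;
     \<forall>(t,x)\<in>D. ((\<lambda>s. f s x) has_real_derivative ft t x) (at t);
     \<forall>(t,x)\<in>D. ((\<lambda>y. f t y) has_real_derivative fx t x) (at x);
     smooth_bdd D ft; smooth_bdd D fx \<rbrakk> \<Longrightarrow> smooth_bdd D f"

definition Smat :: "real \<Rightarrow> real \<Rightarrow> real^3^3" where
  "Smat a b = vector [vector [3, 0, -a], vector [0, 2*a, 3*b], vector [-a, 3*b, a^2]]"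

definition Amat :: "real \<Rightarrow> real \<Rightarrow> real^3^3" where
  "Amat a b = vector [vector [0, a, b], vector [1, 0, 0], vector [0, 1, 0]]"

definition eigvals :: "real^3^3 \<Rightarrow> real set" where
  "eigvals M = {l. \<exists>v. v \<noteq> 0 \<and> M *v v = l *\<^sub>R v}"

text \<open>The j-th smallest eigenvalue (j = 1,2,3); meaningful when there are exactly three.\<close>
definition eig :: "real^3^3 \<Rightarrow> nat \<Rightarrow> real" where
  "eig M j = sorted_list_of_set (eigvals M) ! (j - 1)"

definition ell1 :: "real \<Rightarrow> real \<Rightarrow> real \<Rightarrow> real^3" where
  "ell1 a b l = vector [a*(2*a - l), 3*b*(l - 3), (l - 3)*(l - 2*a)]"

definition ell2 :: "real \<Rightarrow> real \<Rightarrow> real \<Rightarrow> real^3" where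
  "ell2 a b l = vector [-3*a*b, (l - 3)*(l - a^2) - a^2, 3*b*(l - 3)]"

definition ell3 :: "real \<Rightarrow> real \<Rightarrow> real \<Rightarrow> real^3" where
  "ell3 a b l = vector [(l - 2*a)*(l - a^2) - 9*b^2, -3*a*b, -a*(l - 2*a)]"

definition Tmat :: "real \<Rightarrow> real \<Rightarrow> real^3^3" where
  "Tmat a b = (let S = Smat a b;
      t1 = (1 / norm (ell1 a b (eig S 1))) *\<^sub>R ell1 a b (eig S 1);
      t2 = (1 / norm (ell2 a b (eig S 2))) *\<^sub>R ell2 a b (eig S 2);
      t3 = (1 / norm (ell3 a b (eig S 3))) *\<^sub>R ell3 a b (eig S 3)
    in transpose (vector [t1, t2, t3]))"

definition calA :: "real \<Rightarrow> real \<Rightarrow> real^3^3" where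
  "calA a b = matrix_inv (Tmat a b) ** Amat a b ** Tmat a b"

end

theory Submission
  imports Defs
begin

definition cp :: "real \<Rightarrow> real \<Rightarrow> real \<Rightarrow> real" where
  "cp a b l = l^3 - (3+2*a+a^2)*l^2 + (6*a+2*a^2+2*a^3-9*b^2)*l - (4*a^3-27*b^2)"

lemma Smat_mult:
  "Smat a b *v v = vector [3* v$1 - a* v$3, 2*a* v$2 + 3*b* v$3, -a* v$1 + 3*b* v$2 + a^2* v$3]"
  unfolding Smat_def
  by (simp add: vec_eq_iff matrix_vector_mult_def sum_3 forall_3)

lemma Smat_entries:
  "Smat a b $1$1 = 3" "Smat a b $1$2 = 0" "Smat a b $1$3 = -a"
  "Smat a b $2$1 = 0" "Smat a b $2$2 = 2*a" "Smat a b $2$3 = 3*b"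
  "Smat a b $3$1 = -a" "Smat a b $3$2 = 3*b" "Smat a b $3$3 = a^2"
  by (simp_all add: Smat_def)

lemma Amat_entries:
  "Amat a b $1$1 = 0" "Amat a b $1$2 = a" "Amat a b $1$3 = b"
  "Amat a b $2$1 = 1" "Amat a b $2$2 = 0" "Amat a b $2$3 = 0"
  "Amat a b $3$1 = 0" "Amat a b $3$2 = 1" "Amat a b $3$3 = 0"
  by (simp_all add: Amat_def)

lemma eig_imp_root:
  assumes "Smat a b *v v = l *\<^sub>R v" "v \<noteq> 0"
  shows "cp a b l = 0"
proof -
  have e1: "3* v$1 - a* v$3 = l* v$1" and e2: "2*a* v$2 + 3*b* v$3 = l* v$2"
    and e3: "-a* v$1 + 3*b* v$2 + a^2* v$3 = l* v$3"
    using assms(1) by (simp_all add: Smat_mult vec_eq_iff forall_3)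
  have "cp a b l * v$1 = 0" "cp a b l * v$2 = 0" "cp a b l * v$3 = 0"
    using e1 e2 e3 unfolding cp_def by algebra+
  moreover have "v$1 \<noteq> 0 \<or> v$2 \<noteq> 0 \<or> v$3 \<noteq> 0"
    using assms(2) by (auto simp: vec_eq_iff forall_3)
  ultimately show ?thesis by auto
qed

lemma root_imp_eig:
  assumes "cp a b l = 0"
  shows "Smat a b *v ell1 a b l = l *\<^sub>R ell1 a b l"
    "Smat a b *v ell2 a b l = l *\<^sub>R ell2 a b l"
    "Smat a b *v ell3 a b l = l *\<^sub>R ell3 a b l"
  using assms
  by (simp_all add: Smat_mult vec_eq_iff forall_3 ell1_def ell2_def ell3_def cp_def algebra_simps power2_eq_square power3_eq_cube)

lemma cubic_fact:
  fixes r1 r2 r3 c2 c1 c0 :: real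
  assumes d: "r1 \<noteq> r2" "r1 \<noteq> r3" "r2 \<noteq> r3"
    and h: "\<And>r. r \<in> {r1,r2,r3} \<Longrightarrow> r^3 + c2*r^2 + c1*r + c0 = 0"
  shows "c2 = -(r1+r2+r3)" "c1 = r1*r2+r1*r3+r2*r3" "c0 = -(r1*r2*r3)"
proof -
  have h1: "r1^3 + c2*r1^2 + c1*r1 + c0 = 0" and h2: "r2^3 + c2*r2^2 + c1*r2 + c0 = 0"
    and h3: "r3^3 + c2*r3^2 + c1*r3 + c0 = 0" using h by auto
  have "(r1-r2)*(r1^2+r1*r2+r2^2 + c2*(r1+r2) + c1) = 0" using h1 h2 by algebra
  hence q12: "r1^2+r1*r2+r2^2 + c2*(r1+r2) + c1 = 0" using d by simp
  have "(r1-r3)*(r1^2+r1*r3+r3^2 + c2*(r1+r3) + c1) = 0" using h1 h3 by algebra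
  hence q13: "r1^2+r1*r3+r3^2 + c2*(r1+r3) + c1 = 0" using d by simp
  have "(r2-r3)*(r1+r2+r3+c2) = 0" using q12 q13 by algebra
  thus c2: "c2 = -(r1+r2+r3)" using d by simp
  show c1: "c1 = r1*r2+r1*r3+r2*r3" using q12 c2 by algebra
  show "c0 = -(r1*r2*r3)" using h1 c1 c2 by algebra
qed

definition good :: "real \<Rightarrow> real \<Rightarrow> bool" where
  "good a b \<longleftrightarrow> 0 < a \<and> a \<le> 1/100 \<and> 27*b^2 \<le> 4*a^3"

lemma good_signs:
  assumes "good a b"
  shows "cp a b 0 \<le> 0" "cp a b (a/2) > 0" "cp a b (3*a/2) > 0" "cp a b (5*a/2) < 0"
    "cp a b (5/2) < 0" "cp a b (7/2) > 0"
proof -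
  have a: "0 < a" "a \<le> 1/100" and B: "27*b^2 \<le> 4*a^3" using assms by (auto simp: good_def)
  have b0: "b^2 \<ge> 0" by simp
  have ab: "a*b^2 \<le> 1/100*b^2" using a b0 by (intro mult_right_mono) auto
  have a2: "a^2 > 0" using a by simp
  have a3: "a^3 \<le> 1/100*a^2" using a a2 by (simp add: power3_eq_cube power2_eq_square mult_right_mono)
  have a4: "a^4 \<le> 1/100*a^3" using a by (simp add: power_numeral_reduce mult_right_mono)
  have a3p: "a^3 > 0" "a^4 > 0" using a by simp_all
  have a2': "a^2 \<le> 1/100*a" using a by (simp add: power2_eq_square mult_right_mono)
  show "cp a b 0 \<le> 0" using B by (simp add: cp_def)
  have "cp a b (a/2) = 27*b^2 - 9/2*a*b^2 + 9/4*a^2 - 27/8*a^3 + 3/4*a^4"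
    unfolding cp_def by (simp add: field_simps power2_eq_square power3_eq_cube power_numeral_reduce)
  thus "cp a b (a/2) > 0" using ab a2 a3 a4 a3p b0 by linarith
  have "cp a b (3*a/2) = 27*b^2 - 27/2*a*b^2 + 9/4*a^2 - 17/8*a^3 + 3/4*a^4"
    unfolding cp_def by (simp add: field_simps power2_eq_square power3_eq_cube power_numeral_reduce)
  thus "cp a b (3*a/2) > 0" using ab a2 a3 a4 a3p b0 by linarith
  have "cp a b (5*a/2) = 27*b^2 - 45/2*a*b^2 - 15/4*a^2 + 33/8*a^3 - 5/4*a^4"
    unfolding cp_def by (simp add: field_simps power2_eq_square power3_eq_cube power_numeral_reduce)
  moreover have "a*b^2 \<ge> 0" using a by simp
  ultimately show "cp a b (5*a/2) < 0" using B a2 a3 a4 a3p by linarith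
  have "cp a b (5/2) = -25/8 + 9/2*b^2 + 5/2*a - 5/4*a^2 + a^3"
    unfolding cp_def by (simp add: field_simps power2_eq_square power3_eq_cube power_numeral_reduce)
  thus "cp a b (5/2) < 0" using B a a2 a2' a3 a4 by linarith
  have "cp a b (7/2) = 49/8 - 9/2*b^2 - 7/2*a - 21/4*a^2 + 3*a^3"
    unfolding cp_def by (simp add: field_simps power2_eq_square power3_eq_cube power_numeral_reduce)
  thus "cp a b (7/2) > 0" using B a a2 a2' a3 a4 a3p by linarith
qed

lemma cp_cont: "continuous_on S (cp a b)"
  unfolding cp_def by (intro continuous_intros)

lemma sorted3: "(r1::real) < r2 \<Longrightarrow> r2 < r3 \<Longrightarrow> sorted_list_of_set {r1,r2,r3} = [r1,r2,r3]"
  by (simp add: sorted_list_of_set_insert)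

lemma good_struct:
  assumes g: "good a b"
  defines "l1 \<equiv> eig (Smat a b) 1" and "l2 \<equiv> eig (Smat a b) 2" and "l3 \<equiv> eig (Smat a b) 3"
  shows "0 \<le> l1" "l1 \<le> a/2" "3*a/2 \<le> l2" "l2 \<le> 5*a/2" "5/2 \<le> l3" "l3 \<le> 7/2"
    "cp a b l1 = 0" "cp a b l2 = 0" "cp a b l3 = 0"
    "\<And>m. cp a b m = (m-l1)*(m-l2)*(m-l3)"
    "eigvals (Smat a b) = {l1,l2,l3}" "card (eigvals (Smat a b)) = 3"
    "3+2*a+a^2 = l1+l2+l3" "6*a+2*a^2+2*a^3-9*b^2 = l1*l2+l1*l3+l2*l3" "4*a^3-27*b^2 = l1*l2*l3"
proof -
  have a: "0 < a" "a \<le> 1/100" and B: "27*b^2 \<le> 4*a^3" using g by (auto simp: good_def)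
  note s = good_signs[OF g]
  obtain r1 where r1: "0 \<le> r1" "r1 \<le> a/2" "cp a b r1 = 0"
    using IVT'[of "cp a b" 0 0 "a/2"] s a cp_cont by fastforce
  obtain r2 where r2: "3*a/2 \<le> r2" "r2 \<le> 5*a/2" "cp a b r2 = 0"
    using IVT2'[of "cp a b" "5*a/2" 0 "3*a/2"] s a cp_cont by fastforce
  obtain r3 where r3: "5/2 \<le> r3" "r3 \<le> 7/2" "cp a b r3 = 0"
    using IVT'[of "cp a b" "5/2" 0 "7/2"] s a cp_cont by fastforce
  have lt: "r1 < r2" "r2 < r3" using r1 r2 r3 a by linarith+
  have cpe: "\<And>m. cp a b m = m^3 + (-(3+2*a+a^2))*m^2 + (6*a+2*a^2+2*a^3-9*b^2)*m + (-(4*a^3-27*b^2))"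
    by (simp add: cp_def algebra_simps)
  have hh: "\<And>r. r \<in> {r1,r2,r3} \<Longrightarrow> r^3 + (-(3+2*a+a^2))*r^2 + (6*a+2*a^2+2*a^3-9*b^2)*r + (-(4*a^3-27*b^2)) = 0"
    using r1 r2 r3 cpe by auto
  have d: "r1 \<noteq> r2" "r1 \<noteq> r3" "r2 \<noteq> r3" using lt by auto
  note cf = cubic_fact[OF d hh]
  have v1: "3+2*a+a^2 = r1+r2+r3" and v2: "6*a+2*a^2+2*a^3-9*b^2 = r1*r2+r1*r3+r2*r3"
    and v3: "4*a^3-27*b^2 = r1*r2*r3" using cf by auto
  have fac: "\<And>m. cp a b m = (m-r1)*(m-r2)*(m-r3)"
    unfolding cpe using v1 v2 v3 by algebra
  have E: "eigvals (Smat a b) = {r1,r2,r3}"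
  proof
    show "eigvals (Smat a b) \<subseteq> {r1,r2,r3}"
    proof
      fix m assume "m \<in> eigvals (Smat a b)"
      then obtain v where "v \<noteq> 0" "Smat a b *v v = m *\<^sub>R v" by (auto simp: eigvals_def)
      hence "cp a b m = 0" using eig_imp_root by blast
      thus "m \<in> {r1,r2,r3}" using fac[of m] by auto
    qed
  next
    have n1: "ell1 a b r1 \<noteq> 0"
    proof
      assume "ell1 a b r1 = 0"
      hence "(r1-3)*(r1-2*a) = 0" by (metis ell1_def vector_3(3) zero_index)
      thus False using r1 a by auto
    qed
    have n2: "ell2 a b r2 \<noteq> 0"
    proof
      assume "ell2 a b r2 = 0"
      hence z: "(r2-3)*(r2-a^2) - a^2 = 0" by (metis ell2_def vector_3(2) zero_index)
      have "a^2 \<le> 1/100*a" using a by (simp add: power2_eq_square mult_right_mono)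
      hence "r2 - a^2 > 0" using r2 a by linarith
      moreover have "r2 - 3 < 0" using r2 a by linarith
      ultimately have "(r2-3)*(r2-a^2) < 0" by (simp add: mult_neg_pos)
      thus False using z by (smt (verit) zero_le_power2)
    qed
    have n3: "ell3 a b r3 \<noteq> 0"
    proof
      assume "ell3 a b r3 = 0"
      hence z: "(r3-2*a)*(r3-a^2) - 9*b^2 = 0" by (metis ell3_def vector_3(1) zero_index)
      have "a^2 \<le> 1/100*a" using a by (simp add: power2_eq_square mult_right_mono)
      hence "r3 - a^2 \<ge> 2" "r3 - 2*a \<ge> 2" using r3 a by linarith+
      hence "(r3-2*a)*(r3-a^2) \<ge> 2*2" by (intro mult_mono) auto
      moreover have "a^3 \<le> 1" using a by (simp add: power_le_one)
      ultimately show False using z B by linarith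
    qed
    show "{r1,r2,r3} \<subseteq> eigvals (Smat a b)"
      using root_imp_eig[OF r1(3)] root_imp_eig[OF r2(3)] root_imp_eig[OF r3(3)] n1 n2 n3
      by (auto simp: eigvals_def)
  qed
  have L: "l1 = r1" "l2 = r2" "l3 = r3"
    unfolding l1_def l2_def l3_def eig_def E sorted3[OF lt] by simp_all
  show "0 \<le> l1" "l1 \<le> a/2" "3*a/2 \<le> l2" "l2 \<le> 5*a/2" "5/2 \<le> l3" "l3 \<le> 7/2"
    "cp a b l1 = 0" "cp a b l2 = 0" "cp a b l3 = 0"
    "\<And>m. cp a b m = (m-l1)*(m-l2)*(m-l3)"
    "eigvals (Smat a b) = {l1,l2,l3}"
    "3+2*a+a^2 = l1+l2+l3" "6*a+2*a^2+2*a^3-9*b^2 = l1*l2+l1*l3+l2*l3" "4*a^3-27*b^2 = l1*l2*l3"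
    using r1 r2 r3 fac E v1 v2 v3 unfolding L by auto
  show "card (eigvals (Smat a b)) = 3" using E lt by auto
qed

lemma eig_of_roots:
  assumes g: "good a b" and lt: "r1 < r2" "r2 < r3"
    and r: "cp a b r1 = 0" "cp a b r2 = 0" "cp a b r3 = 0"
  shows "eig (Smat a b) 1 = r1" "eig (Smat a b) 2 = r2" "eig (Smat a b) 3 = r3"
proof -
  note G = good_struct[OF g]
  define l1 l2 l3 where "l1 = eig (Smat a b) 1" "l2 = eig (Smat a b) 2" "l3 = eig (Smat a b) 3"
  have "l1 < l2" "l2 < l3" using G(2,3,4,5) g unfolding l1_l2_l3_def good_def by linarith+
  have sub: "{r1,r2,r3} \<subseteq> {l1,l2,l3}" using r G(10) unfolding l1_l2_l3_def by auto
  have "card {r1,r2,r3} = 3" using lt by auto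
  moreover have "card {l1,l2,l3} \<le> 3" by (simp add: card_insert_le_m1)
  ultimately have "{r1,r2,r3} = {l1,l2,l3}" using sub
    by (metis card_seteq finite.emptyI finite_insert)
  hence "sorted_list_of_set {l1,l2,l3} = [r1,r2,r3]" using sorted3[OF lt] by simp
  moreover have "eigvals (Smat a b) = {l1,l2,l3}" using G(11) unfolding l1_l2_l3_def .
  ultimately show "eig (Smat a b) 1 = r1" "eig (Smat a b) 2 = r2" "eig (Smat a b) 3 = r3"
    unfolding eig_def by simp_all
qed

lemma norm3: "norm (v::real^3) = sqrt ((v$1)^2 + (v$2)^2 + (v$3)^2)"
  by (simp add: norm_vec_def L2_set_def sum_3)

lemma inner3: "(u::real^3) \<bullet> v = u$1* v$1 + u$2* v$2 + u$3* v$3"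
  by (simp add: inner_vec_def sum_3)

lemma Smat_sym: "(Smat a b *v u) \<bullet> w = u \<bullet> (Smat a b *v w)"
  by (simp add: Smat_mult inner3 algebra_simps)

lemma eig_orth:
  assumes "Smat a b *v u = l *\<^sub>R u" "Smat a b *v w = m *\<^sub>R w" "l \<noteq> m"
  shows "u \<bullet> w = 0"
proof -
  have "l * (u \<bullet> w) = m * (u \<bullet> w)"
    using Smat_sym[of a b u w] assms by simp
  thus ?thesis using assms(3) by simp
qed

definition tc :: "real \<Rightarrow> real \<Rightarrow> nat \<Rightarrow> real^3" where
  "tc a b j = (if j = 1 then (1 / norm (ell1 a b (eig (Smat a b) 1))) *\<^sub>R ell1 a b (eig (Smat a b) 1)
      else if j = 2 then (1 / norm (ell2 a b (eig (Smat a b) 2))) *\<^sub>R ell2 a b (eig (Smat a b) 2)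
      else (1 / norm (ell3 a b (eig (Smat a b) 3))) *\<^sub>R ell3 a b (eig (Smat a b) 3))"

lemma Tmat_tc: "Tmat a b $ m $ 1 = tc a b 1 $ m" "Tmat a b $ m $ 2 = tc a b 2 $ m"
  "Tmat a b $ m $ 3 = tc a b 3 $ m"
  by (simp_all add: Tmat_def tc_def transpose_def Let_def)

lemma good_ell:
  assumes g: "good a b"
  defines "l1 \<equiv> eig (Smat a b) 1" and "l2 \<equiv> eig (Smat a b) 2" and "l3 \<equiv> eig (Smat a b) 3"
  shows "norm (ell1 a b l1) \<ge> 3*a" "norm (ell2 a b l2) \<ge> 2*a" "norm (ell3 a b l3) \<ge> 3"
    "Smat a b *v ell1 a b l1 = l1 *\<^sub>R ell1 a b l1"
    "Smat a b *v ell2 a b l2 = l2 *\<^sub>R ell2 a b l2"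
    "Smat a b *v ell3 a b l3 = l3 *\<^sub>R ell3 a b l3"
    "l1 < l2" "l2 < l3" "l2 - l1 \<ge> a" "l3 - l1 \<ge> 2" "l3 - l2 \<ge> 2"
proof -
  note G = good_struct[OF g, folded l1_def l2_def l3_def]
  have a: "0 < a" "a \<le> 1/100" and B: "27*b^2 \<le> 4*a^3" using g by (auto simp: good_def)
  have a2: "a^2 \<le> 1/100*a" using a by (simp add: power2_eq_square mult_right_mono)
  show "Smat a b *v ell1 a b l1 = l1 *\<^sub>R ell1 a b l1"
    "Smat a b *v ell2 a b l2 = l2 *\<^sub>R ell2 a b l2"
    "Smat a b *v ell3 a b l3 = l3 *\<^sub>R ell3 a b l3"
    using root_imp_eig G(7,8,9) by auto
  show "l1 < l2" "l2 < l3" "l2 - l1 \<ge> a" "l3 - l1 \<ge> 2" "l3 - l2 \<ge> 2" using G a by linarith+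
  have "3 - l1 \<ge> 2" "2*a - l1 \<ge> 3/2*a" using G a by linarith+
  hence "(3 - l1)*(2*a-l1) \<ge> 2*(3/2*a)" by (intro mult_mono) (use a in auto)
  hence "\<bar>ell1 a b l1 $ 3\<bar> \<ge> 3*a" by (simp add: ell1_def algebra_simps)
  thus "norm (ell1 a b l1) \<ge> 3*a" using component_le_norm_cart[of "ell1 a b l1" 3] by linarith
  have "3 - l2 \<ge> 2" "l2 - a^2 \<ge> a" using G a a2 by linarith+
  hence "(3 - l2)*(l2 - a^2) \<ge> 2*a" by (intro mult_mono) (use a in auto)
  moreover have "ell2 a b l2 $ 2 = -((3 - l2)*(l2 - a^2) + a^2)" by (simp add: ell2_def algebra_simps)
  ultimately have "\<bar>ell2 a b l2 $ 2\<bar> \<ge> 2*a" by (smt (verit) zero_le_power2)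
  thus "norm (ell2 a b l2) \<ge> 2*a" using component_le_norm_cart[of "ell2 a b l2" 2] by linarith
  have "l3 - a^2 \<ge> 2" "l3 - 2*a \<ge> 2" using G a a2 by linarith+
  hence "(l3-2*a)*(l3-a^2) \<ge> 2*2" by (intro mult_mono) auto
  moreover have "a^3 \<le> a" using power_decreasing[of 1 3 a] a by simp
  ultimately have "(l3-2*a)*(l3-a^2) - 9*b^2 \<ge> 3" using B a by linarith
  hence "\<bar>ell3 a b l3 $ 1\<bar> \<ge> 3" by (simp add: ell3_def)
  thus "norm (ell3 a b l3) \<ge> 3" using component_le_norm_cart[of "ell3 a b l3" 1] by linarith
qed

lemma tc_orthonormal:
  assumes g: "good a b" and ij: "i \<in> {1,2,3}" "j \<in> {1,2,3}"
  shows "tc a b i \<bullet> tc a b j = (if i = j then 1 else 0)"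
proof -
  note E = good_ell[OF g]
  have a: "0 < a" using g by (simp add: good_def)
  have nz: "norm (ell1 a b (eig (Smat a b) 1)) > 0" "norm (ell2 a b (eig (Smat a b) 2)) > 0"
    "norm (ell3 a b (eig (Smat a b) 3)) > 0" using E(1,2,3) a by linarith+
  have un: "((1/norm v) *\<^sub>R v) \<bullet> ((1/norm v) *\<^sub>R v) = 1" if "norm v > 0" for v :: "real^3"
  proof -
    have "((1/norm v) *\<^sub>R v) \<bullet> ((1/norm v) *\<^sub>R v) = (norm ((1/norm v) *\<^sub>R v))^2"
      by (simp add: dot_square_norm)
    also have "... = 1" using that by simp
    finally show ?thesis .
  qed
  have unit: "tc a b k \<bullet> tc a b k = 1" if kk: "k \<in> {1,2,3}" for k
  proof -
    consider "k = 1" | "k = 2" | "k = 3" using kk by auto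
    thus ?thesis proof cases
      case 1 thus ?thesis using un[OF nz(1)] by (simp add: tc_def)
    next
      case 2 thus ?thesis using un[OF nz(2)] by (simp add: tc_def)
    next
      case 3 thus ?thesis using un[OF nz(3)] by (simp add: tc_def)
    qed
  qed
  have o12: "ell1 a b (eig (Smat a b) 1) \<bullet> ell2 a b (eig (Smat a b) 2) = 0"
    by (rule eig_orth[OF E(4) E(5)]) (use E(7) in simp)
  have o13: "ell1 a b (eig (Smat a b) 1) \<bullet> ell3 a b (eig (Smat a b) 3) = 0"
    by (rule eig_orth[OF E(4) E(6)]) (use E(7,8) in simp)
  have o23: "ell2 a b (eig (Smat a b) 2) \<bullet> ell3 a b (eig (Smat a b) 3) = 0"
    by (rule eig_orth[OF E(5) E(6)]) (use E(8) in simp)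
  have o12': "tc a b 1 \<bullet> tc a b 2 = 0" using o12 by (simp add: tc_def)
  have o13': "tc a b 1 \<bullet> tc a b 3 = 0" using o13 by (simp add: tc_def)
  have o23': "tc a b 2 \<bullet> tc a b 3 = 0" using o23 by (simp add: tc_def)
  show ?thesis using ij unit o12' o13' o23'
    by (auto simp: inner_commute)
qed

lemma mat_inv_orth:
  fixes T :: "real^3^3"
  assumes "transpose T ** T = mat 1"
  shows "matrix_inv T = transpose T"
proof -
  have TT: "T ** transpose T = mat 1" using assms matrix_left_right_inverse by blast
  have "T ** matrix_inv T = mat 1 \<and> matrix_inv T ** T = mat 1"
    unfolding matrix_inv_def by (rule someI[of _ "transpose T"]) (use assms TT in simp)
  hence "matrix_inv T ** T = mat 1" by simp
  hence "matrix_inv T ** T ** transpose T = transpose T" by simp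
  thus ?thesis using TT by (metis matrix_mul_assoc matrix_mul_rid)
qed

lemma Tmat_orth:
  assumes g: "good a b"
  shows "transpose (Tmat a b) ** Tmat a b = mat 1"
proof -
  have "(transpose (Tmat a b) ** Tmat a b) $ i $ j = mat 1 $ i $ j" for i j
  proof -
    have "(transpose (Tmat a b) ** Tmat a b) $ i $ j = (\<Sum>k\<in>UNIV. Tmat a b $ k $ i * Tmat a b $ k $ j)"
      by (simp add: matrix_matrix_mult_def transpose_def)
    also have "... = tc a b (if i = 1 then 1 else if i = 2 then 2 else 3) \<bullet> tc a b (if j = 1 then 1 else if j = 2 then 2 else 3)"
      using exhaust_3[of i] exhaust_3[of j] by (auto simp: sum_3 inner3 Tmat_tc)
    also have "... = mat 1 $ i $ j"
      using exhaust_3[of i] exhaust_3[of j] tc_orthonormal[OF g]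
      by (auto simp: mat_def)
    finally show ?thesis .
  qed
  thus ?thesis by (simp add: vec_eq_iff)
qed

lemma calA_entry:
  assumes g: "good a b"
  shows "calA a b $ i $ j = Tmat a b $ 1 $ i * (a * Tmat a b $ 2 $ j + b * Tmat a b $ 3 $ j)
      + Tmat a b $ 2 $ i * Tmat a b $ 1 $ j + Tmat a b $ 3 $ i * Tmat a b $ 2 $ j"
  unfolding calA_def mat_inv_orth[OF Tmat_orth[OF g]]
  by (simp add: matrix_matrix_mult_def transpose_def sum_3 Amat_entries algebra_simps)

lemma div_bnd:
  fixes x c L n :: real
  assumes "\<bar>x\<bar> \<le> c * L" "L \<le> n" "0 \<le> c" "0 < L"
  shows "\<bar>x / n\<bar> \<le> c"
proof -
  have n: "n > 0" using assms by linarith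
  have "\<bar>x\<bar> \<le> c * n" using assms(1,2,3) by (smt (verit) mult_left_mono)
  thus ?thesis using n by (simp add: abs_divide pos_divide_le_eq)
qed

lemma T_le1: "\<bar>Tmat a b $ m $ j\<bar> \<le> 1"
proof -
  have "\<bar>v $ m / norm v\<bar> \<le> 1" for v :: "real^3"
  proof (cases "v = 0")
    case False
    hence "norm v > 0" by simp
    thus ?thesis using component_le_norm_cart[of v m] by (simp add: abs_divide divide_le_eq_1)
  qed simp
  moreover have "Tmat a b $ m $ j = (transpose (vector [(1 / norm (ell1 a b (eig (Smat a b) 1))) *\<^sub>R ell1 a b (eig (Smat a b) 1),
      (1 / norm (ell2 a b (eig (Smat a b) 2))) *\<^sub>R ell2 a b (eig (Smat a b) 2),
      (1 / norm (ell3 a b (eig (Smat a b) 3))) *\<^sub>R ell3 a b (eig (Smat a b) 3)] :: real^3^3)) $ m $ j"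
    by (simp add: Tmat_def Let_def)
  ultimately show ?thesis
    using exhaust_3[of j] by (auto simp: transpose_def)
qed

lemma b_bound:
  assumes "good a b" shows "\<bar>b\<bar> \<le> sqrt a ^ 3 / 2"
proof -
  have a: "a > 0" and B: "27*b^2 \<le> 4*a^3" using assms by (auto simp: good_def)
  have h: "(sqrt a ^ 3 / 2)^2 = a^3/4" using a by (simp add: power_mult_distrib power2_eq_square power3_eq_cube)
  have "a^3 > 0" using a by simp
  hence "b^2 \<le> (sqrt a ^ 3 / 2)^2" unfolding h using B by linarith
  thus ?thesis using a by (simp add: abs_le_square_iff[symmetric])
qed

lemma T_bounds:
  assumes g: "good a b" defines "s \<equiv> sqrt a"
  shows "\<bar>Tmat a b $ 1 $ 1\<bar> \<le> 3 * s^2" "\<bar>Tmat a b $ 2 $ 1\<bar> \<le> 3 * s"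
    "\<bar>Tmat a b $ 1 $ 2\<bar> \<le> 3 * s^3" "\<bar>Tmat a b $ 3 $ 2\<bar> \<le> 3 * s"
    "\<bar>Tmat a b $ 2 $ 3\<bar> \<le> 3 * s^5" "\<bar>Tmat a b $ 3 $ 3\<bar> \<le> 3 * s^2"
proof -
  note G = good_struct[OF g] and E = good_ell[OF g]
  have a: "0 < a" "a \<le> 1/100" using g by (auto simp: good_def)
  have s: "s > 0" "s^2 = a" using a by (auto simp: s_def)
  have bb: "\<bar>b\<bar> \<le> s^3/2" using b_bound[OF g] by (simp add: s_def)
  have T1: "Tmat a b $ m $ 1 = ell1 a b (eig (Smat a b) 1) $ m / norm (ell1 a b (eig (Smat a b) 1))"
    and T2: "Tmat a b $ m $ 2 = ell2 a b (eig (Smat a b) 2) $ m / norm (ell2 a b (eig (Smat a b) 2))"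
    and T3: "Tmat a b $ m $ 3 = ell3 a b (eig (Smat a b) 3) $ m / norm (ell3 a b (eig (Smat a b) 3))" for m
    by (simp_all add: Tmat_tc tc_def)
  define l1 l2 l3 where "l1 = eig (Smat a b) 1" "l2 = eig (Smat a b) 2" "l3 = eig (Smat a b) 3"
  note G = G[folded l1_l2_l3_def] and E = E[folded l1_l2_l3_def]
  note T1 = T1[folded l1_l2_l3_def] and T2 = T2[folded l1_l2_l3_def] and T3 = T3[folded l1_l2_l3_def]
  have s3: "s^3 = s*a" and s5: "s^5 = s*a*a" using s by (simp_all add: power_numeral_reduce power2_eq_square)
  have "\<bar>a*(2*a-l1)\<bar> \<le> a*(2*a)" using G a by (simp add: abs_mult)
  hence "\<bar>ell1 a b l1 $ 1\<bar> \<le> (3* s^2) * (3*a)" using a s by (simp add: ell1_def)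
  thus "\<bar>Tmat a b $ 1 $ 1\<bar> \<le> 3 * s^2" unfolding T1 by (rule div_bnd) (use E a in auto)
  have "\<bar>l1 - 3\<bar> \<le> 3" using G a by auto
  hence "3*\<bar>b\<bar>*\<bar>l1-3\<bar> \<le> 3*\<bar>b\<bar>*3" by (intro mult_left_mono) auto
  hence "\<bar>3*b*(l1-3)\<bar> \<le> 3*(s^3/2)*3" using bb by (simp add: abs_mult)
  hence "\<bar>ell1 a b l1 $ 2\<bar> \<le> (3* s) * (3*a)" using a s s3 by (simp add: ell1_def)
  thus "\<bar>Tmat a b $ 2 $ 1\<bar> \<le> 3 * s" unfolding T1 by (rule div_bnd) (use E a s in auto)
  have "\<bar>-3*a*b\<bar> \<le> 3*a*(s^3/2)" using a bb by (simp add: abs_mult)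
  hence X: "\<bar>ell2 a b l2 $ 1\<bar> \<le> 3*a*(s^3/2)" by (simp add: ell2_def)
  have "3*a*(s^3/2) \<le> (3* s^3) * (2*a)" using a s by (simp add: algebra_simps)
  with X have "\<bar>ell2 a b l2 $ 1\<bar> \<le> (3* s^3) * (2*a)" by (rule order_trans)
  thus "\<bar>Tmat a b $ 1 $ 2\<bar> \<le> 3 * s^3" unfolding T2 by (rule div_bnd) (use E a s in auto)
  have "\<bar>l2 - 3\<bar> \<le> 3" using G a by auto
  hence "3*\<bar>b\<bar>*\<bar>l2-3\<bar> \<le> 3*\<bar>b\<bar>*3" by (intro mult_left_mono) auto
  hence "\<bar>3*b*(l2-3)\<bar> \<le> 3*(s^3/2)*3" using bb by (simp add: abs_mult)
  hence "\<bar>ell2 a b l2 $ 3\<bar> \<le> (3* s) * (2*a)" using a s s3 by (simp add: ell2_def)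
  thus "\<bar>Tmat a b $ 3 $ 2\<bar> \<le> 3 * s" unfolding T2 by (rule div_bnd) (use E a s in auto)
  have "\<bar>-3*a*b\<bar> \<le> 3*a*(s^3/2)" using a bb by (simp add: abs_mult)
  hence X: "\<bar>ell3 a b l3 $ 2\<bar> \<le> 3*a*(s^3/2)" by (simp add: ell3_def)
  have "3*a*(s^3/2) \<le> (3* s^5) * 3" using a s s5 s3 by (simp add: algebra_simps)
  with X have "\<bar>ell3 a b l3 $ 2\<bar> \<le> (3* s^5) * 3" by (rule order_trans)
  thus "\<bar>Tmat a b $ 2 $ 3\<bar> \<le> 3 * s^5" unfolding T3 by (rule div_bnd) (use E a s in auto)
  have "\<bar>-a*(l3-2*a)\<bar> \<le> a*4" using G a by (simp add: abs_mult)
  hence "\<bar>ell3 a b l3 $ 3\<bar> \<le> (3* s^2) * 3" using a s by (simp add: ell3_def)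
  thus "\<bar>Tmat a b $ 3 $ 3\<bar> \<le> 3 * s^2" unfolding T3 by (rule div_bnd) (use E a s in auto)
qed

lemma cp_isCont:
  assumes "isCont A x" "isCont B x"
  shows "isCont (\<lambda>y. cp (A y) (B y) m) x"
  unfolding cp_def by (intro continuous_intros assms)

lemma lam_cont_all:
  fixes A B :: "real \<Rightarrow> real"
  assumes G: "open G" "x \<in> G" "\<forall>y\<in>G. good (A y) (B y)" and cA: "isCont A x" and cB: "isCont B x"
    and e: "e > 0"
  shows "\<forall>\<^sub>F y in at x. \<bar>eig (Smat (A y) (B y)) 1 - eig (Smat (A x) (B x)) 1\<bar> < e
     \<and> \<bar>eig (Smat (A y) (B y)) 2 - eig (Smat (A x) (B x)) 2\<bar> < e
     \<and> \<bar>eig (Smat (A y) (B y)) 3 - eig (Smat (A x) (B x)) 3\<bar> < e"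
proof -
  have gx: "good (A x) (B x)" using G by auto
  define l1 l2 l3 where "l1 = eig (Smat (A x) (B x)) 1" "l2 = eig (Smat (A x) (B x)) 2"
    "l3 = eig (Smat (A x) (B x)) 3"
  note S = good_struct[OF gx, folded l1_l2_l3_def]
  have ax: "0 < A x" "A x \<le> 1/100" using gx by (auto simp: good_def)
  define d where "d = min (e/2) (A x / 4)"
  have d: "0 < d" "d < e" "4*d \<le> A x" using e ax by (auto simp: d_def)
  have g12: "l2 - l1 \<ge> A x" and g23: "l3 - l2 \<ge> 2" using S ax by linarith+
  let ?c = "\<lambda>m. cp (A x) (B x) m"
  have s1m: "?c (l1-d) < 0"
  proof -
    have "?c (l1-d) = -(d * (l2-l1+d) * (l3-l1+d))" unfolding S(10) by (simp add: algebra_simps)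
    moreover have "d * (l2-l1+d) * (l3-l1+d) > 0" using d g12 g23 ax by (intro mult_pos_pos) auto
    ultimately show ?thesis by simp
  qed
  have s1p: "?c (l1+d) > 0"
  proof -
    have "?c (l1+d) = d * (l2-l1-d) * (l3-l1-d)" unfolding S(10) by (simp add: algebra_simps)
    moreover have "d * (l2-l1-d) * (l3-l1-d) > 0" using d g12 g23 ax by (intro mult_pos_pos) auto
    ultimately show ?thesis by simp
  qed
  have s2m: "?c (l2-d) > 0"
  proof -
    have "?c (l2-d) = (l2-l1-d) * d * (l3-l2+d)" unfolding S(10) by (simp add: algebra_simps)
    moreover have "(l2-l1-d) * d * (l3-l2+d) > 0" using d g12 g23 ax by (intro mult_pos_pos) auto
    ultimately show ?thesis by simp
  qed
  have s2p: "?c (l2+d) < 0"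
  proof -
    have "?c (l2+d) = -((l2-l1+d) * d * (l3-l2-d))" unfolding S(10) by (simp add: algebra_simps)
    moreover have "(l2-l1+d) * d * (l3-l2-d) > 0" using d g12 g23 ax by (intro mult_pos_pos) auto
    ultimately show ?thesis by simp
  qed
  have s3m: "?c (l3-d) < 0"
  proof -
    have "?c (l3-d) = -((l3-l1-d) * (l3-l2-d) * d)" unfolding S(10) by (simp add: algebra_simps)
    moreover have "(l3-l1-d) * (l3-l2-d) * d > 0" using d g12 g23 ax by (intro mult_pos_pos) auto
    ultimately show ?thesis by simp
  qed
  have s3p: "?c (l3+d) > 0"
  proof -
    have "?c (l3+d) = (l3-l1+d) * (l3-l2+d) * d" unfolding S(10) by (simp add: algebra_simps)
    moreover have "(l3-l1+d) * (l3-l2+d) * d > 0" using d g12 g23 ax by (intro mult_pos_pos) auto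
    ultimately show ?thesis by simp
  qed
  have T: "((\<lambda>y. cp (A y) (B y) m) \<longlongrightarrow> ?c m) (at x)" for m
    using cp_isCont[OF cA cB, of m] by (simp add: isCont_def)
  have ev: "\<forall>\<^sub>F y in at x. y \<in> G \<and> cp (A y) (B y) (l1-d) < 0 \<and> cp (A y) (B y) (l1+d) > 0
     \<and> cp (A y) (B y) (l2-d) > 0 \<and> cp (A y) (B y) (l2+d) < 0
     \<and> cp (A y) (B y) (l3-d) < 0 \<and> cp (A y) (B y) (l3+d) > 0"
    using eventually_at_in_open'[OF G(1,2)]
      order_tendstoD(2)[OF T s1m] order_tendstoD(1)[OF T s1p]
      order_tendstoD(1)[OF T s2m] order_tendstoD(2)[OF T s2p]
      order_tendstoD(2)[OF T s3m] order_tendstoD(1)[OF T s3p]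
    by eventually_elim auto
  show ?thesis
  proof (rule eventually_mono[OF ev], elim conjE)
    fix y assume y: "y \<in> G" and c: "cp (A y) (B y) (l1-d) < 0" "cp (A y) (B y) (l1+d) > 0"
      "cp (A y) (B y) (l2-d) > 0" "cp (A y) (B y) (l2+d) < 0"
      "cp (A y) (B y) (l3-d) < 0" "cp (A y) (B y) (l3+d) > 0"
    have gy: "good (A y) (B y)" using G y by auto
    obtain r1 where r1: "l1-d \<le> r1" "r1 \<le> l1+d" "cp (A y) (B y) r1 = 0"
      using IVT'[of "cp (A y) (B y)" "l1-d" 0 "l1+d"] c d cp_cont by fastforce
    obtain r2 where r2: "l2-d \<le> r2" "r2 \<le> l2+d" "cp (A y) (B y) r2 = 0"
      using IVT2'[of "cp (A y) (B y)" "l2+d" 0 "l2-d"] c d cp_cont by fastforce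
    obtain r3 where r3: "l3-d \<le> r3" "r3 \<le> l3+d" "cp (A y) (B y) r3 = 0"
      using IVT'[of "cp (A y) (B y)" "l3-d" 0 "l3+d"] c d cp_cont by fastforce
    have lt: "r1 < r2" "r2 < r3" using r1 r2 r3 d g12 g23 ax by linarith+
    note R = eig_of_roots[OF gy lt r1(3) r2(3) r3(3)]
    show "\<bar>eig (Smat (A y) (B y)) 1 - eig (Smat (A x) (B x)) 1\<bar> < e
     \<and> \<bar>eig (Smat (A y) (B y)) 2 - eig (Smat (A x) (B x)) 2\<bar> < e
     \<and> \<bar>eig (Smat (A y) (B y)) 3 - eig (Smat (A x) (B x)) 3\<bar> < e"
      unfolding R l1_l2_l3_def[symmetric] using r1 r2 r3 d by auto
  qed
qed

lemma lam_cont: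
  fixes A B :: "real \<Rightarrow> real"
  assumes G: "open G" "x \<in> G" "\<forall>y\<in>G. good (A y) (B y)" and cA: "isCont A x" and cB: "isCont B x"
    and j: "j \<in> {1,2,3}"
  shows "isCont (\<lambda>y. eig (Smat (A y) (B y)) j) x"
  unfolding isCont_def tendsto_iff dist_real_def
proof (intro allI impI)
  fix e :: real assume e: "e > 0"
  show "\<forall>\<^sub>F y in at x. \<bar>eig (Smat (A y) (B y)) j - eig (Smat (A x) (B x)) j\<bar> < e"
    using lam_cont_all[OF G cA cB e] j by (auto elim: eventually_mono)
qed

lemma cp_diff: "cp a b u - cp a b v = (u - v) * (u^2 + u * v + v^2 - (3+2*a+a^2)*(u+v) + (6*a+2*a^2+2*a^3-9*b^2))"
  unfolding cp_def by algebra

lemma lam_deriv: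
  fixes A B :: "real \<Rightarrow> real"
  assumes G: "open G" "x \<in> G" "\<forall>y\<in>G. good (A y) (B y)"
    and dA: "(A has_real_derivative A') (at x)" and dB: "(B has_real_derivative B') (at x)"
    and j: "j \<in> {1,2,3}"
  shows "\<exists>D. ((\<lambda>y. eig (Smat (A y) (B y)) j) has_real_derivative D) (at x)"
proof -
  define L where "L = (\<lambda>y. eig (Smat (A y) (B y)) j)"
  define l where "l = L x"
  have cA: "isCont A x" and cB: "isCont B x" using dA dB by (simp_all add: DERIV_isCont)
  have cL: "isCont L x" unfolding L_def by (rule lam_cont[OF G cA cB j])
  define H where "H = (\<lambda>y. cp (A y) (B y) l)"
  obtain Hd where Hd: "(H has_real_derivative Hd) (at x)"
  proof -
    have "\<exists>D. (H has_real_derivative D) (at x)"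
      unfolding H_def cp_def by (rule exI) (auto intro!: derivative_eq_intros dA dB)
    thus ?thesis using that by blast
  qed
  define Q where "Q = (\<lambda>y. (L y)^2 + L y * l + l^2 - (3+2*A y+(A y)^2)*(L y + l) + (6*A y+2*(A y)^2+2*(A y)^3-9*(B y)^2))"
  have gx: "good (A x) (B x)" using G by auto
  have root: "cp (A y) (B y) (L y) = 0" if "y \<in> G" for y
  proof -
    have gy: "good (A y) (B y)" using G that by auto
    show ?thesis using good_struct(7,8,9)[OF gy] j unfolding L_def by auto
  qed
  have Hx: "H x = 0" using root[OF G(2)] by (simp add: H_def l_def)
  have eqn: "(L y - l) * Q y = - H y" if "y \<in> G" for y
    using cp_diff[of "A y" "B y" "L y" l] root[OF that] by (simp add: Q_def H_def)
  have Qx: "Q x \<noteq> 0"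
  proof -
    define l1 l2 l3 where "l1 = eig (Smat (A x) (B x)) 1" "l2 = eig (Smat (A x) (B x)) 2"
      "l3 = eig (Smat (A x) (B x)) 3"
    note S = good_struct[OF gx, folded l1_l2_l3_def]
    have ax: "A x > 0" "A x \<le> 1/100" using gx by (simp_all add: good_def)
    have lt: "l1 < l2" "l2 < l3" using S ax by linarith+
    have "Q x = 3*l^2 - 2*(l1+l2+l3)*l + (l1*l2+l1*l3+l2*l3)"
      unfolding Q_def S(13)[symmetric] S(14)[symmetric] by (simp add: l_def algebra_simps power2_eq_square)
    moreover have "l = l1 \<or> l = l2 \<or> l = l3" using j unfolding l_def L_def l1_l2_l3_def by auto
    ultimately have "Q x = (l-l1)*(l-l2) \<or> Q x = (l-l1)*(l-l3) \<or> Q x = (l-l2)*(l-l3)"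
      by (auto simp: algebra_simps power2_eq_square)
    moreover have "l = l1 \<longrightarrow> Q x = (l1-l2)*(l1-l3)" "l = l2 \<longrightarrow> Q x = (l2-l1)*(l2-l3)"
      "l = l3 \<longrightarrow> Q x = (l3-l1)*(l3-l2)"
      using \<open>Q x = 3*l^2 - 2*(l1+l2+l3)*l + (l1*l2+l1*l3+l2*l3)\<close>
      by (auto simp: algebra_simps power2_eq_square)
    ultimately show ?thesis using lt \<open>l = l1 \<or> l = l2 \<or> l = l3\<close> by auto
  qed
  have cQ: "isCont Q x" unfolding Q_def by (intro continuous_intros cL cA cB)
  have tQ: "(Q \<longlongrightarrow> Q x) (at x)" using cQ by (simp add: isCont_def)
  have tH: "((\<lambda>y. (H y - H x) / (y - x)) \<longlongrightarrow> Hd) (at x)"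
    using Hd by (simp add: has_field_derivative_iff)
  have lim: "((\<lambda>y. - ((H y - H x) / (y - x)) / Q y) \<longlongrightarrow> - Hd / Q x) (at x)"
    by (intro tendsto_intros tH tQ Qx)
  have ev: "\<forall>\<^sub>F y in at x. y \<in> G \<and> Q y \<noteq> 0"
    using eventually_at_in_open'[OF G(1,2)] tendsto_imp_eventually_ne[OF tQ Qx]
    by eventually_elim auto
  have "((\<lambda>y. (L y - L x) / (y - x)) \<longlongrightarrow> - Hd / Q x) (at x)"
  proof (rule Lim_transform_eventually[OF lim])
    show "\<forall>\<^sub>F y in at x. - ((H y - H x) / (y - x)) / Q y = (L y - L x) / (y - x)"
    proof (rule eventually_mono[OF ev])
      fix y assume y: "y \<in> G \<and> Q y \<noteq> 0"
      have "L y - L x = - H y / Q y" using eqn[of y] y by (simp add: l_def field_simps)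
      thus "- ((H y - H x) / (y - x)) / Q y = (L y - L x) / (y - x)" using Hx by simp
    qed
  qed
  hence "(L has_real_derivative - Hd / Q x) (at x)" by (simp add: has_field_derivative_iff)
  thus ?thesis unfolding L_def by blast
qed

lemma vec_norm_deriv:
  fixes f1 f2 f3 :: "real \<Rightarrow> real" and m :: 3
  assumes d: "(f1 has_real_derivative d1) (at x)" "(f2 has_real_derivative d2) (at x)"
    "(f3 has_real_derivative d3) (at x)"
    and pos: "(f1 x)^2 + (f2 x)^2 + (f3 x)^2 > 0" and m: "m \<in> {1,2,3}"
  shows "\<exists>D. ((\<lambda>y. vector [f1 y, f2 y, f3 y] $ m / norm (vector [f1 y, f2 y, f3 y] :: real^3)) has_real_derivative D) (at x)"
proof -
  have e: "(\<lambda>y. vector [f1 y, f2 y, f3 y] $ m / norm (vector [f1 y, f2 y, f3 y] :: real^3))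
     = (\<lambda>y. (if m = 1 then f1 y else if m = 2 then f2 y else f3 y) / sqrt ((f1 y)^2 + (f2 y)^2 + (f3 y)^2))"
    using m by (auto simp: norm3)
  have "\<exists>D. ((\<lambda>y. (if m = 1 then f1 y else if m = 2 then f2 y else f3 y) / sqrt ((f1 y)^2 + (f2 y)^2 + (f3 y)^2)) has_real_derivative D) (at x)"
  proof -
    have h: "\<exists>D. ((\<lambda>y. f y / sqrt ((f1 y)^2 + (f2 y)^2 + (f3 y)^2)) has_real_derivative D) (at x)"
      if df: "(f has_real_derivative dd) (at x)" for f dd
      using pos by (intro exI) (auto intro!: derivative_eq_intros d df)
    consider "m = 1" | "m = 2" | "m = 3" using m by auto
    thus ?thesis by cases (use h[OF d(1)] h[OF d(2)] h[OF d(3)] in auto)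
  qed
  thus ?thesis unfolding e .
qed

lemma T_deriv:
  fixes A B :: "real \<Rightarrow> real"
  assumes G: "open G" "x \<in> G" "\<forall>y\<in>G. good (A y) (B y)"
    and dA: "(A has_real_derivative A') (at x)" and dB: "(B has_real_derivative B') (at x)"
    and m: "m \<in> {1,2,3}" and j: "j \<in> {1,2,3}"
  shows "\<exists>D. ((\<lambda>y. Tmat (A y) (B y) $ m $ j) has_real_derivative D) (at x)"
proof -
  have gx: "good (A x) (B x)" using G by auto
  have ax: "A x > 0" using gx by (simp add: good_def)
  note E = good_ell[OF gx]
  have npos: "norm v > 0 \<Longrightarrow> (v$1)^2 + (v$2)^2 + (v$3)^2 > 0" for v :: "real^3"
    by (simp add: norm3)
  consider "j = 1" | "j = 2" | "j = 3" using j by auto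
  thus ?thesis
  proof cases
    case 1
    define L where "L = (\<lambda>y. eig (Smat (A y) (B y)) 1)"
    obtain Ld where Ld: "(L has_real_derivative Ld) (at x)" using lam_deriv[OF G dA dB, of 1] unfolding L_def by auto
    have p: "(ell1 (A x) (B x) (L x) $ 1)^2 + (ell1 (A x) (B x) (L x) $ 2)^2 + (ell1 (A x) (B x) (L x) $ 3)^2 > 0"
      using npos[of "ell1 (A x) (B x) (L x)"] E(1) ax unfolding L_def by force
    have "\<exists>D. ((\<lambda>y. vector [A y*(2*A y - L y), 3*B y*(L y - 3), (L y - 3)*(L y - 2*A y)] $ m
        / norm (vector [A y*(2*A y - L y), 3*B y*(L y - 3), (L y - 3)*(L y - 2*A y)] :: real^3)) has_real_derivative D) (at x)"
      by (rule vec_norm_deriv[OF _ _ _ _ m]) (use p in \<open>auto intro!: derivative_eq_intros dA dB Ld simp: ell1_def\<close>)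
    then obtain D where D: "((\<lambda>y. vector [A y*(2*A y - L y), 3*B y*(L y - 3), (L y - 3)*(L y - 2*A y)] $ m
        / norm (vector [A y*(2*A y - L y), 3*B y*(L y - 3), (L y - 3)*(L y - 2*A y)] :: real^3)) has_real_derivative D) (at x)" by blast
    have "((\<lambda>y. Tmat (A y) (B y) $ m $ j) has_real_derivative D) (at x)"
      by (rule has_field_derivative_transform_within_open[OF D G(1,2)])
        (simp add: 1 Tmat_tc tc_def L_def ell1_def)
    thus ?thesis by blast
  next
    case 2
    define L where "L = (\<lambda>y. eig (Smat (A y) (B y)) 2)"
    obtain Ld where Ld: "(L has_real_derivative Ld) (at x)" using lam_deriv[OF G dA dB, of 2] unfolding L_def by auto
    have p: "(ell2 (A x) (B x) (L x) $ 1)^2 + (ell2 (A x) (B x) (L x) $ 2)^2 + (ell2 (A x) (B x) (L x) $ 3)^2 > 0"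
      using npos[of "ell2 (A x) (B x) (L x)"] E(2) ax unfolding L_def by force
    have "\<exists>D. ((\<lambda>y. vector [-3*A y*B y, (L y - 3)*(L y - (A y)^2) - (A y)^2, 3*B y*(L y - 3)] $ m
        / norm (vector [-3*A y*B y, (L y - 3)*(L y - (A y)^2) - (A y)^2, 3*B y*(L y - 3)] :: real^3)) has_real_derivative D) (at x)"
      by (rule vec_norm_deriv[OF _ _ _ _ m]) (use p in \<open>auto intro!: derivative_eq_intros dA dB Ld simp: ell2_def\<close>)
    then obtain D where D: "((\<lambda>y. vector [-3*A y*B y, (L y - 3)*(L y - (A y)^2) - (A y)^2, 3*B y*(L y - 3)] $ m
        / norm (vector [-3*A y*B y, (L y - 3)*(L y - (A y)^2) - (A y)^2, 3*B y*(L y - 3)] :: real^3)) has_real_derivative D) (at x)" by blast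
    have "((\<lambda>y. Tmat (A y) (B y) $ m $ j) has_real_derivative D) (at x)"
      by (rule has_field_derivative_transform_within_open[OF D G(1,2)])
        (simp add: 2 Tmat_tc tc_def L_def ell2_def)
    thus ?thesis by blast
  next
    case 3
    define L where "L = (\<lambda>y. eig (Smat (A y) (B y)) 3)"
    obtain Ld where Ld: "(L has_real_derivative Ld) (at x)" using lam_deriv[OF G dA dB, of 3] unfolding L_def by auto
    have p: "(ell3 (A x) (B x) (L x) $ 1)^2 + (ell3 (A x) (B x) (L x) $ 2)^2 + (ell3 (A x) (B x) (L x) $ 3)^2 > 0"
      using npos[of "ell3 (A x) (B x) (L x)"] E(3) ax unfolding L_def by force
    have "\<exists>D. ((\<lambda>y. vector [(L y - 2*A y)*(L y - (A y)^2) - 9*(B y)^2, -3*A y*B y, -A y*(L y - 2*A y)] $ m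
        / norm (vector [(L y - 2*A y)*(L y - (A y)^2) - 9*(B y)^2, -3*A y*B y, -A y*(L y - 2*A y)] :: real^3)) has_real_derivative D) (at x)"
      by (rule vec_norm_deriv[OF _ _ _ _ m]) (use p in \<open>auto intro!: derivative_eq_intros dA dB Ld simp: ell3_def\<close>)
    then obtain D where D: "((\<lambda>y. vector [(L y - 2*A y)*(L y - (A y)^2) - 9*(B y)^2, -3*A y*B y, -A y*(L y - 2*A y)] $ m
        / norm (vector [(L y - 2*A y)*(L y - (A y)^2) - 9*(B y)^2, -3*A y*B y, -A y*(L y - 2*A y)] :: real^3)) has_real_derivative D) (at x)" by blast
    have "((\<lambda>y. Tmat (A y) (B y) $ m $ j) has_real_derivative D) (at x)"
      by (rule has_field_derivative_transform_within_open[OF D G(1,2)])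
        (simp add: 3 Tmat_tc tc_def L_def ell3_def)
    thus ?thesis by blast
  qed
qed

definition idx :: "3 \<Rightarrow> nat" where "idx j = (if j = 1 then 1 else if j = 2 then 2 else 3)"

lemma idx_in: "idx j \<in> {1,2,3}" by (simp add: idx_def)

lemma Tmat_idx: "Tmat a b $ m $ j = tc a b (idx j) $ m"
  using exhaust_3[of j] by (auto simp: idx_def Tmat_tc)

lemma tc_eig:
  assumes g: "good a b" and n: "n \<in> {1,2,3}"
  shows "Smat a b *v tc a b n = eig (Smat a b) n *\<^sub>R tc a b n"
proof -
  note E = good_ell[OF g]
  have sc: "Smat a b *v (c *\<^sub>R v) = c *\<^sub>R (Smat a b *v v)" for c v
    by (simp add: Smat_mult vec_eq_iff forall_3 algebra_simps)
  show ?thesis using n E(4,5,6) by (auto simp: tc_def sc)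
qed

lemma T_eig_comp:
  fixes j :: 3
  assumes g: "good a b"
  defines "l \<equiv> eig (Smat a b) (idx j)"
  shows "3 * Tmat a b $ 1 $ j - a * Tmat a b $ 3 $ j = l * Tmat a b $ 1 $ j"
    "2*a * Tmat a b $ 2 $ j + 3*b * Tmat a b $ 3 $ j = l * Tmat a b $ 2 $ j"
    "-a * Tmat a b $ 1 $ j + 3*b * Tmat a b $ 2 $ j + a^2 * Tmat a b $ 3 $ j = l * Tmat a b $ 3 $ j"
  using tc_eig[OF g idx_in[of j]] unfolding l_def Tmat_idx
  by (simp_all add: Smat_mult vec_eq_iff forall_3)

lemma T_orthn:
  assumes g: "good a b"
  shows "(\<Sum>m\<in>UNIV. Tmat a b $ m $ i * Tmat a b $ m $ j) = (if i = j then 1 else 0)"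
    "(\<Sum>k\<in>UNIV. Tmat a b $ m $ k * Tmat a b $ r $ k) = (if m = r then 1 else 0)"
proof -
  have O: "transpose (Tmat a b) ** Tmat a b = mat 1" by (rule Tmat_orth[OF g])
  hence O2: "Tmat a b ** transpose (Tmat a b) = mat 1" using matrix_left_right_inverse by blast
  have "(transpose (Tmat a b) ** Tmat a b) $ i $ j = (\<Sum>m\<in>UNIV. Tmat a b $ m $ i * Tmat a b $ m $ j)"
    by (simp add: matrix_matrix_mult_def transpose_def)
  thus "(\<Sum>m\<in>UNIV. Tmat a b $ m $ i * Tmat a b $ m $ j) = (if i = j then 1 else 0)"
    using O by (simp add: mat_def)
  have "(Tmat a b ** transpose (Tmat a b)) $ m $ r = (\<Sum>k\<in>UNIV. Tmat a b $ m $ k * Tmat a b $ r $ k)"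
    by (simp add: matrix_matrix_mult_def transpose_def)
  thus "(\<Sum>k\<in>UNIV. Tmat a b $ m $ k * Tmat a b $ r $ k) = (if m = r then 1 else 0)"
    using O2 by (simp add: mat_def)
qed

lemma deriv_zero_on:
  fixes f :: "real \<Rightarrow> real"
  assumes "(f has_real_derivative D) (at x)" "open G" "x \<in> G" "\<And>y. y \<in> G \<Longrightarrow> f y = 0"
  shows "D = 0"
proof -
  have "((\<lambda>y. 0) has_real_derivative D) (at x)"
    by (rule has_field_derivative_transform_within_open[OF assms(1,2,3)]) (simp add: assms(4))
  thus ?thesis using DERIV_const DERIV_unique by blast
qed

context
  fixes A B :: "real \<Rightarrow> real" and G :: "real set" and x A' B' :: real and dt :: "3 \<Rightarrow> 3 \<Rightarrow> real"
  assumes G: "open G" "x \<in> G" "\<forall>y\<in>G. good (A y) (B y)"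
    and dA: "(A has_real_derivative A') (at x)" and dB: "(B has_real_derivative B') (at x)"
    and dT: "\<And>m j. ((\<lambda>y. Tmat (A y) (B y) $ m $ j) has_real_derivative dt m j) (at x)"
begin

lemma unit_deriv: "(\<Sum>m\<in>UNIV. Tmat (A x) (B x) $ m $ j * dt m j) = 0"
proof -
  have "((\<lambda>y. (\<Sum>m\<in>UNIV. Tmat (A y) (B y) $ m $ j * Tmat (A y) (B y) $ m $ j) - 1) has_real_derivative
     (\<Sum>m\<in>UNIV. dt m j * Tmat (A x) (B x) $ m $ j + Tmat (A x) (B x) $ m $ j * dt m j)) (at x)"
    unfolding sum_3 by (auto intro!: derivative_eq_intros dT)
  moreover have "y \<in> G \<Longrightarrow> (\<Sum>m\<in>UNIV. Tmat (A y) (B y) $ m $ j * Tmat (A y) (B y) $ m $ j) - 1 = 0" for y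
    using T_orthn(1)[of "A y" "B y" j j] G by auto
  ultimately have "(\<Sum>m\<in>UNIV. dt m j * Tmat (A x) (B x) $ m $ j + Tmat (A x) (B x) $ m $ j * dt m j) = 0"
    using deriv_zero_on G by blast
  thus ?thesis unfolding sum_3 by (simp add: algebra_simps)
qed

lemma expand_deriv: "dt m j = (\<Sum>k\<in>UNIV. (\<Sum>r\<in>UNIV. Tmat (A x) (B x) $ r $ k * dt r j) * Tmat (A x) (B x) $ m $ k)"
proof -
  have gx: "good (A x) (B x)" using G by auto
  have "(\<Sum>k\<in>UNIV. (\<Sum>r\<in>UNIV. Tmat (A x) (B x) $ r $ k * dt r j) * Tmat (A x) (B x) $ m $ k)
     = (\<Sum>r\<in>UNIV. dt r j * (\<Sum>k\<in>UNIV. Tmat (A x) (B x) $ m $ k * Tmat (A x) (B x) $ r $ k))"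
    unfolding sum_3 by (simp add: algebra_simps)
  also have "... = dt m j" using T_orthn(2)[OF gx] exhaust_3[of m] by (auto simp: sum_3)
  finally show ?thesis by simp
qed

lemma K_rel:
  assumes kj: "k \<noteq> j"
  defines "t \<equiv> \<lambda>m i. Tmat (A x) (B x) $ m $ i"
  shows "(eig (Smat (A x) (B x)) (idx j) - eig (Smat (A x) (B x)) (idx k)) * (\<Sum>m\<in>UNIV. t m k * dt m j)
    = t 1 k * (- A' * t 3 j) + t 2 k * (2*A' * t 2 j + 3*B' * t 3 j)
      + t 3 k * (- A' * t 1 j + 3*B' * t 2 j + 2*A x*A' * t 3 j)"
proof -
  have gx: "good (A x) (B x)" using G by auto
  define L where "L = (\<lambda>y. eig (Smat (A y) (B y)) (idx j))"
  obtain Ld where Ld: "(L has_real_derivative Ld) (at x)"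
    using lam_deriv[OF G dA dB idx_in[of j]] unfolding L_def by blast
  let ?T = "\<lambda>m y. Tmat (A y) (B y) $ m $ j"
  have e1: "3 * dt 1 j - (A' * t 3 j + A x * dt 3 j) - (Ld * t 1 j + L x * dt 1 j) = 0"
  proof (rule deriv_zero_on[OF _ G(1,2)])
    show "((\<lambda>y. 3 * ?T 1 y - A y * ?T 3 y - L y * ?T 1 y) has_real_derivative
      3 * dt 1 j - (A' * t 3 j + A x * dt 3 j) - (Ld * t 1 j + L x * dt 1 j)) (at x)"
      unfolding t_def by (auto intro!: derivative_eq_intros dT dA dB Ld)
    show "y \<in> G \<Longrightarrow> 3 * ?T 1 y - A y * ?T 3 y - L y * ?T 1 y = 0" for y
      using T_eig_comp(1)[of "A y" "B y" j] G unfolding L_def by auto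
  qed
  have e2: "2*A' * t 2 j + 2*A x * dt 2 j + (3*B' * t 3 j + 3*B x * dt 3 j) - (Ld * t 2 j + L x * dt 2 j) = 0"
  proof (rule deriv_zero_on[OF _ G(1,2)])
    show "((\<lambda>y. 2*A y * ?T 2 y + 3*B y * ?T 3 y - L y * ?T 2 y) has_real_derivative
      2*A' * t 2 j + 2*A x * dt 2 j + (3*B' * t 3 j + 3*B x * dt 3 j) - (Ld * t 2 j + L x * dt 2 j)) (at x)"
      unfolding t_def by (auto intro!: derivative_eq_intros dT dA dB Ld)
    show "y \<in> G \<Longrightarrow> 2*A y * ?T 2 y + 3*B y * ?T 3 y - L y * ?T 2 y = 0" for y
      using T_eig_comp(2)[of "A y" "B y" j] G unfolding L_def by auto
  qed
  have e3: "- A' * t 1 j - A x * dt 1 j + (3*B' * t 2 j + 3*B x * dt 2 j) + (2*A x*A' * t 3 j + (A x)^2 * dt 3 j)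
     - (Ld * t 3 j + L x * dt 3 j) = 0"
  proof (rule deriv_zero_on[OF _ G(1,2)])
    show "((\<lambda>y. - A y * ?T 1 y + 3*B y * ?T 2 y + (A y)^2 * ?T 3 y - L y * ?T 3 y) has_real_derivative
      - A' * t 1 j - A x * dt 1 j + (3*B' * t 2 j + 3*B x * dt 2 j) + (2*A x*A' * t 3 j + (A x)^2 * dt 3 j)
     - (Ld * t 3 j + L x * dt 3 j)) (at x)"
      unfolding t_def by (auto intro!: derivative_eq_intros dT dA dB Ld simp: algebra_simps)
    show "y \<in> G \<Longrightarrow> - A y * ?T 1 y + 3*B y * ?T 2 y + (A y)^2 * ?T 3 y - L y * ?T 3 y = 0" for y
      using T_eig_comp(3)[of "A y" "B y" j] G unfolding L_def by auto
  qed
  define lk where "lk = eig (Smat (A x) (B x)) (idx k)"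
  have u1: "3 * t 1 k - A x * t 3 k = lk * t 1 k"
    and u2: "2*A x * t 2 k + 3*B x * t 3 k = lk * t 2 k"
    and u3: "-A x * t 1 k + 3*B x * t 2 k + (A x)^2 * t 3 k = lk * t 3 k"
    using T_eig_comp[OF gx, of k] unfolding t_def lk_def by auto
  have o: "t 1 k * t 1 j + t 2 k * t 2 j + t 3 k * t 3 j = 0"
    using T_orthn(1)[OF gx, of k j] kj unfolding t_def by (simp add: sum_3)
  have U1: "3 * t 1 k - A x * t 3 k - lk * t 1 k = 0" using u1 by simp
  have U2: "2*A x * t 2 k + 3*B x * t 3 k - lk * t 2 k = 0" using u2 by simp
  have U3: "-A x * t 1 k + 3*B x * t 2 k + (A x)^2 * t 3 k - lk * t 3 k = 0" using u3 by simp
  have idt: "(L x - lk) * (t 1 k * dt 1 j + t 2 k * dt 2 j + t 3 k * dt 3 j)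
    - (t 1 k * (- A' * t 3 j) + t 2 k * (2*A' * t 2 j + 3*B' * t 3 j)
      + t 3 k * (- A' * t 1 j + 3*B' * t 2 j + 2*A x*A' * t 3 j))
    = - (t 1 k * (3 * dt 1 j - (A' * t 3 j + A x * dt 3 j) - (Ld * t 1 j + L x * dt 1 j))
       + t 2 k * (2*A' * t 2 j + 2*A x * dt 2 j + (3*B' * t 3 j + 3*B x * dt 3 j) - (Ld * t 2 j + L x * dt 2 j))
       + t 3 k * (- A' * t 1 j - A x * dt 1 j + (3*B' * t 2 j + 3*B x * dt 2 j) + (2*A x*A' * t 3 j + (A x)^2 * dt 3 j)
     - (Ld * t 3 j + L x * dt 3 j)))
      + dt 1 j * (3 * t 1 k - A x * t 3 k - lk * t 1 k)
      + dt 2 j * (2*A x * t 2 k + 3*B x * t 3 k - lk * t 2 k)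
      + dt 3 j * (-A x * t 1 k + 3*B x * t 2 k + (A x)^2 * t 3 k - lk * t 3 k)
      - Ld * (t 1 k * t 1 j + t 2 k * t 2 j + t 3 k * t 3 j)"
    by (simp add: algebra_simps power2_eq_square)
  have "(L x - lk) * (t 1 k * dt 1 j + t 2 k * dt 2 j + t 3 k * dt 3 j)
    - (t 1 k * (- A' * t 3 j) + t 2 k * (2*A' * t 2 j + 3*B' * t 3 j)
      + t 3 k * (- A' * t 1 j + 3*B' * t 2 j + 2*A x*A' * t 3 j)) = 0"
    unfolding idt e1 e2 e3 U1 U2 U3 o by simp
  thus ?thesis
    unfolding sum_3 lk_def[symmetric] by (simp add: L_def)
qed

end

lemma taylor2_bounds:
  fixes g g1 g2 :: "real \<Rightarrow> real"
  assumes h: "h > 0"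
    and D: "\<forall>y. x-h \<le> y \<and> y \<le> x+h \<longrightarrow> (g has_real_derivative g1 y) (at y) \<and> (g1 has_real_derivative g2 y) (at y) \<and> \<bar>g2 y\<bar> \<le> M"
  shows "\<bar>g (x+h) - g x - h * g1 x\<bar> \<le> M*h^2/2" "\<bar>g (x-h) - g x + h * g1 x\<bar> \<le> M*h^2/2"
proof -
  define diff where "diff = (\<lambda>m::nat. if m = 0 then g else if m = 1 then g1 else g2)"
  have DD: "\<forall>m t. m < 2 \<and> x-h \<le> t \<and> t \<le> x+h \<longrightarrow> DERIV (diff m) t :> diff (Suc m) t"
    using D by (auto simp: diff_def less_2_cases_iff)
  have DD1: "\<forall>m t. m < 2 \<and> x \<le> t \<and> t \<le> x+h \<longrightarrow> DERIV (diff m) t :> diff (Suc m) t"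
    using DD h by auto
  have DD2: "\<forall>m t. m < 2 \<and> x-h \<le> t \<and> t \<le> x \<longrightarrow> DERIV (diff m) t :> diff (Suc m) t"
    using DD h by auto
  obtain t where t: "x < t" "t < x+h" "g (x+h) = (\<Sum>m<2. (diff m x / fact m) * (x+h - x)^m) + (diff 2 t / fact 2) * (x+h - x)^2"
    using Taylor_up[of 2 diff g x "x+h" x] DD1 h by (auto simp: diff_def)
  have "g (x+h) = g x + h * g1 x + g2 t / 2 * h^2" using t(3) by (simp add: diff_def numeral_2_eq_2)
  moreover have "\<bar>g2 t\<bar> \<le> M" using D t by auto
  ultimately have "\<bar>g (x+h) - g x - h * g1 x\<bar> = \<bar>g2 t\<bar> * h^2 / 2" by (simp add: abs_mult)
  also have "... \<le> M * h^2/2" using \<open>\<bar>g2 t\<bar> \<le> M\<close> by (simp add: mult_right_mono divide_right_mono)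
  finally show "\<bar>g (x+h) - g x - h * g1 x\<bar> \<le> M*h^2/2" .
  obtain t where t: "x-h < t" "t < x" "g (x-h) = (\<Sum>m<2. (diff m x / fact m) * (x-h - x)^m) + (diff 2 t / fact 2) * (x-h - x)^2"
    using Taylor_down[of 2 diff g "x-h" x x] DD2 h by (auto simp: diff_def)
  have "g (x-h) = g x - h * g1 x + g2 t / 2 * h^2" using t(3) by (simp add: diff_def numeral_2_eq_2)
  moreover have "\<bar>g2 t\<bar> \<le> M" using D t by auto
  ultimately have "\<bar>g (x-h) - g x + h * g1 x\<bar> = \<bar>g2 t\<bar> * h^2 / 2" by (simp add: abs_mult)
  also have "... \<le> M * h^2/2" using \<open>\<bar>g2 t\<bar> \<le> M\<close> by (simp add: mult_right_mono divide_right_mono)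
  finally show "\<bar>g (x-h) - g x + h * g1 x\<bar> \<le> M*h^2/2" .
qed

lemma taylor3_sym:
  fixes g g1 g2 g3 :: "real \<Rightarrow> real"
  assumes h: "h > 0"
    and D: "\<forall>y. x-h \<le> y \<and> y \<le> x+h \<longrightarrow> (g has_real_derivative g1 y) (at y) \<and> (g1 has_real_derivative g2 y) (at y)
       \<and> (g2 has_real_derivative g3 y) (at y) \<and> \<bar>g3 y\<bar> \<le> M"
  shows "\<bar>g (x+h) - g (x-h) - 2 * h * g1 x\<bar> \<le> M*h^3/3"
proof -
  define diff where "diff = (\<lambda>m::nat. if m = 0 then g else if m = 1 then g1 else if m = 2 then g2 else g3)"
  have DD: "\<forall>m t. m < 3 \<and> x-h \<le> t \<and> t \<le> x+h \<longrightarrow> DERIV (diff m) t :> diff (Suc m) t"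
  proof (intro allI impI)
    fix m :: nat and t :: real assume "m < 3 \<and> x-h \<le> t \<and> t \<le> x+h"
    moreover have "m < 3 \<longleftrightarrow> m = 0 \<or> m = 1 \<or> m = 2" by auto
    ultimately show "DERIV (diff m) t :> diff (Suc m) t" using D by (auto simp: diff_def)
  qed
  have DD1: "\<forall>m t. m < 3 \<and> x \<le> t \<and> t \<le> x+h \<longrightarrow> DERIV (diff m) t :> diff (Suc m) t"
    using DD h by auto
  have DD2: "\<forall>m t. m < 3 \<and> x-h \<le> t \<and> t \<le> x \<longrightarrow> DERIV (diff m) t :> diff (Suc m) t"
    using DD h by auto
  have s3: "(\<Sum>m<3. f m) = f 0 + f 1 + f 2" for f :: "nat \<Rightarrow> real"
    by (simp add: numeral_3_eq_3 numeral_2_eq_2)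
  obtain t1 where t1: "x < t1" "t1 < x+h" "g (x+h) = (\<Sum>m<3. (diff m x / fact m) * (x+h - x)^m) + (diff 3 t1 / fact 3) * (x+h - x)^3"
    using Taylor_up[of 3 diff g x "x+h" x] DD1 h by (auto simp: diff_def)
  obtain t2 where t2: "x-h < t2" "t2 < x" "g (x-h) = (\<Sum>m<3. (diff m x / fact m) * (x-h - x)^m) + (diff 3 t2 / fact 3) * (x-h - x)^3"
    using Taylor_down[of 3 diff g "x-h" x x] DD2 h by (auto simp: diff_def)
  have f3: "fact 3 = (6::real)" by (simp add: fact_numeral)
  have e1: "g (x+h) = g x + h * g1 x + g2 x / 2 * h^2 + g3 t1 / 6 * h^3"
    using t1(3) unfolding s3 f3 by (simp add: diff_def)
  have e2: "g (x-h) = g x - h * g1 x + g2 x / 2 * h^2 - g3 t2 / 6 * h^3"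
    using t2(3) unfolding s3 f3 by (simp add: diff_def power2_eq_square power3_eq_cube)
  have b1: "\<bar>g3 t1\<bar> \<le> M" "\<bar>g3 t2\<bar> \<le> M" using D t1 t2 by auto
  have "g (x+h) - g (x-h) - 2 * h * g1 x = (g3 t1 + g3 t2) * h^3 / 6" unfolding e1 e2 by (simp add: algebra_simps)
  hence "\<bar>g (x+h) - g (x-h) - 2 * h * g1 x\<bar> = \<bar>(g3 t1 + g3 t2) * h^3 / 6\<bar>" by (rule arg_cong)
  also have "... = \<bar>g3 t1 + g3 t2\<bar> * h^3 / 6" using h by (simp add: abs_mult)
  finally have "\<bar>g (x+h) - g (x-h) - 2 * h * g1 x\<bar> = \<bar>g3 t1 + g3 t2\<bar> * h^3 / 6" .
  also have "... \<le> (2*M) * h^3 / 6" using b1 h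
    by (intro divide_right_mono mult_right_mono) auto
  finally show ?thesis by simp
qed

lemma glaeser_a:
  fixes g g1 g2 :: "real \<Rightarrow> real"
  assumes h: "h > 0" and gx: "g x = h^2"
    and D: "\<forall>y. x-h \<le> y \<and> y \<le> x+h \<longrightarrow> (g has_real_derivative g1 y) (at y) \<and> (g1 has_real_derivative g2 y) (at y) \<and> \<bar>g2 y\<bar> \<le> M"
    and pos: "g (x+h) \<ge> 0" "g (x-h) \<ge> 0"
  shows "\<bar>g1 x\<bar> \<le> (1 + M/2) * h" "g (x+h) \<le> (2 + M) * h^2" "g (x-h) \<le> (2 + M) * h^2"
proof -
  note T = taylor2_bounds[OF h D]
  have T1: "g (x+h) - g x - h * g1 x \<le> M*h^2/2" "-(g (x+h) - g x - h * g1 x) \<le> M*h^2/2"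
    "g (x-h) - g x + h * g1 x \<le> M*h^2/2" "-(g (x-h) - g x + h * g1 x) \<le> M*h^2/2"
    using T unfolding abs_le_iff by auto
  have "h * g1 x \<le> h^2 + M*h^2/2" "- (h * g1 x) \<le> h^2 + M*h^2/2"
    using T1 pos gx by linarith+
  moreover have "h^2 + M*h^2/2 = h * ((1 + M/2) * h)" by (simp add: algebra_simps power2_eq_square)
  ultimately have u: "h * g1 x \<le> h * ((1 + M/2) * h)" "h * (- g1 x) \<le> h * ((1 + M/2) * h)" by simp_all
  have "g1 x \<le> (1 + M/2) * h" using u(1) mult_le_cancel_left_pos[OF h] by blast
  moreover have "- g1 x \<le> (1 + M/2) * h" using u(2) mult_le_cancel_left_pos[OF h] by blast
  ultimately have "g1 x \<le> (1 + M/2) * h" "- g1 x \<le> (1 + M/2) * h" by auto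
  thus g1: "\<bar>g1 x\<bar> \<le> (1 + M/2) * h" by linarith
  have "h * \<bar>g1 x\<bar> \<le> h * ((1 + M/2) * h)" using g1 h by (intro mult_left_mono) auto
  moreover have "h * \<bar>g1 x\<bar> \<ge> h * g1 x" using h by (simp add: mult_left_mono)
  moreover have "h * \<bar>g1 x\<bar> \<ge> h * (- g1 x)" using h by (intro mult_left_mono) auto
  hence "h * \<bar>g1 x\<bar> \<ge> - (h * g1 x)" by simp
  moreover have "h * ((1 + M/2) * h) = h^2 + M*h^2/2" by (simp add: algebra_simps power2_eq_square)
  ultimately have hb: "h * g1 x \<le> h^2 + M*h^2/2" "- (h * g1 x) \<le> h^2 + M*h^2/2"
    by linarith+
  have "(2 + M) * h^2 = 2*h^2 + M*h^2" by (simp add: algebra_simps)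
  thus "g (x+h) \<le> (2 + M) * h^2" "g (x-h) \<le> (2 + M) * h^2"
    using T1 gx hb by linarith+
qed

lemma glaeser_b:
  fixes f f1 f2 f3 :: "real \<Rightarrow> real"
  assumes h: "h > 0" and K: "K \<ge> 1"
    and D: "\<forall>y. x-h \<le> y \<and> y \<le> x+h \<longrightarrow> (f has_real_derivative f1 y) (at y) \<and> (f1 has_real_derivative f2 y) (at y)
       \<and> (f2 has_real_derivative f3 y) (at y) \<and> \<bar>f3 y\<bar> \<le> M"
    and dp: "27 * (f (x+h))^2 \<le> 4 * (g (x+h))^3" and dm: "27 * (f (x-h))^2 \<le> 4 * (g (x-h))^3"
    and gp: "0 \<le> g (x+h)" "g (x+h) \<le> K * h^2" and gm: "0 \<le> g (x-h)" "g (x-h) \<le> K * h^2"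
  shows "\<bar>f1 x\<bar> \<le> (K^2 + M/6) * h^2"
proof -
  have fb: "\<bar>f z\<bar> \<le> K^2 * h^3" if z: "27 * (f z)^2 \<le> 4 * (g z)^3" "0 \<le> g z" "g z \<le> K * h^2" for z
  proof -
    have "(g z)^3 \<le> (K*h^2)^3" using z by (intro power_mono) auto
    also have "... = K^3 * h^6" by (simp add: power_mult_distrib power_mult[symmetric])
    also have "... \<le> K^4 * h^6" using K by (intro mult_right_mono power_increasing) auto
    finally have "(f z)^2 \<le> (K^2 * h^3)^2" using z(1)
      by (simp add: power_mult_distrib power_mult[symmetric]) (smt (verit) zero_le_power2)
    thus ?thesis using h K by (simp add: abs_le_square_iff[symmetric])
  qed
  have a: "\<bar>f (x+h)\<bar> \<le> K^2 * h^3" "\<bar>f (x-h)\<bar> \<le> K^2 * h^3" using fb dp dm gp gm by auto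
  have T: "\<bar>f (x+h) - f (x-h) - 2 * h * f1 x\<bar> \<le> M*h^3/3" by (rule taylor3_sym[OF h D])
  have "2*h*f1 x \<le> 2 * K^2 * h^3 + M*h^3/3 \<and> -(2*h*f1 x) \<le> 2 * K^2 * h^3 + M*h^3/3"
    using a T unfolding abs_le_iff by linarith
  hence "\<bar>2*h*f1 x\<bar> \<le> 2 * K^2 * h^3 + M*h^3/3" unfolding abs_le_iff .
  hence "2 * h * \<bar>f1 x\<bar> \<le> 2 * K^2 * h^3 + M*h^3/3" using h by (simp add: abs_mult)
  hence "h * (2 * \<bar>f1 x\<bar>) \<le> h * (2 * ((K^2 + M/6) * h^2))" by (simp add: algebra_simps power2_eq_square power3_eq_cube)
  hence "2 * \<bar>f1 x\<bar> \<le> 2 * ((K^2 + M/6) * h^2)" using h by (simp add: mult_le_cancel_left_pos)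
  thus ?thesis by simp
qed

definition ubd :: "'p set \<Rightarrow> ('p \<Rightarrow> real) \<Rightarrow> nat \<Rightarrow> ('p \<Rightarrow> real) \<Rightarrow> bool" where
  "ubd P s k f \<longleftrightarrow> (\<exists>c. \<forall>p\<in>P. \<bar>f p\<bar> \<le> c * s p ^ k)"

locale ubd_ctx =
  fixes P :: "'p set" and s :: "'p \<Rightarrow> real"
  assumes sp: "\<forall>p\<in>P. 0 < s p \<and> s p \<le> 1"
begin

lemma ubd_pos: "ubd P s k f \<Longrightarrow> \<exists>c\<ge>0. \<forall>p\<in>P. \<bar>f p\<bar> \<le> c * s p ^ k"
  unfolding ubd_def
proof (elim exE)
  fix c assume c: "\<forall>p\<in>P. \<bar>f p\<bar> \<le> c * s p ^ k"
  have "\<forall>p\<in>P. \<bar>f p\<bar> \<le> max c 0 * s p ^ k"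
  proof
    fix p assume p: "p \<in> P"
    have "c * s p ^ k \<le> max c 0 * s p ^ k" using sp p by (intro mult_right_mono) auto
    thus "\<bar>f p\<bar> \<le> max c 0 * s p ^ k" using c p by force
  qed
  thus "\<exists>c\<ge>0. \<forall>p\<in>P. \<bar>f p\<bar> \<le> c * s p ^ k" by (intro exI[of _ "max c 0"]) auto
qed

lemma ubd_mult: "ubd P s k1 f \<Longrightarrow> ubd P s k2 g \<Longrightarrow> ubd P s (k1+k2) (\<lambda>p. f p * g p)"
proof -
  assume "ubd P s k1 f" "ubd P s k2 g"
  then obtain c1 c2 where c: "c1 \<ge> 0" "\<forall>p\<in>P. \<bar>f p\<bar> \<le> c1 * s p ^ k1" "c2 \<ge> 0" "\<forall>p\<in>P. \<bar>g p\<bar> \<le> c2 * s p ^ k2"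
    using ubd_pos by meson
  have "\<forall>p\<in>P. \<bar>f p * g p\<bar> \<le> (c1*c2) * s p ^ (k1+k2)"
  proof
    fix p assume p: "p \<in> P"
    have "\<bar>f p * g p\<bar> = \<bar>f p\<bar> * \<bar>g p\<bar>" by (simp add: abs_mult)
    also have "... \<le> (c1 * s p ^ k1) * (c2 * s p ^ k2)" using c p sp by (intro mult_mono) auto
    also have "... = (c1*c2) * s p ^ (k1+k2)" by (simp add: power_add algebra_simps)
    finally show "\<bar>f p * g p\<bar> \<le> (c1*c2) * s p ^ (k1+k2)" .
  qed
  thus ?thesis unfolding ubd_def by blast
qed

lemma ubd_weak: "ubd P s k f \<Longrightarrow> k' \<le> k \<Longrightarrow> ubd P s k' f"
proof -
  assume "ubd P s k f" "k' \<le> k"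
  then obtain c where c: "c \<ge> 0" "\<forall>p\<in>P. \<bar>f p\<bar> \<le> c * s p ^ k" using ubd_pos by meson
  have "\<forall>p\<in>P. \<bar>f p\<bar> \<le> c * s p ^ k'"
  proof
    fix p assume p: "p \<in> P"
    have "s p ^ k \<le> s p ^ k'" using sp p \<open>k' \<le> k\<close> by (intro power_decreasing) auto
    hence "c * s p ^ k \<le> c * s p ^ k'" using c by (intro mult_left_mono) auto
    thus "\<bar>f p\<bar> \<le> c * s p ^ k'" using c p by force
  qed
  thus ?thesis unfolding ubd_def by blast
qed

lemma ubd_add: "ubd P s k1 f \<Longrightarrow> ubd P s k2 g \<Longrightarrow> ubd P s (min k1 k2) (\<lambda>p. f p + g p)"
proof -
  assume "ubd P s k1 f" "ubd P s k2 g"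
  hence "ubd P s (min k1 k2) f" "ubd P s (min k1 k2) g" using ubd_weak by auto
  then obtain c1 c2 where c: "\<forall>p\<in>P. \<bar>f p\<bar> \<le> c1 * s p ^ min k1 k2" "\<forall>p\<in>P. \<bar>g p\<bar> \<le> c2 * s p ^ min k1 k2"
    unfolding ubd_def by blast
  have "\<forall>p\<in>P. \<bar>f p + g p\<bar> \<le> (c1+c2) * s p ^ min k1 k2"
    using c by (auto simp: algebra_simps intro: order_trans[OF abs_triangle_ineq] add_mono)
  thus ?thesis unfolding ubd_def by blast
qed

lemma ubd_minus: "ubd P s k f \<Longrightarrow> ubd P s k (\<lambda>p. - f p)"
  unfolding ubd_def by simp

lemma ubd_diff: "ubd P s k1 f \<Longrightarrow> ubd P s k2 g \<Longrightarrow> ubd P s (min k1 k2) (\<lambda>p. f p - g p)"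
  using ubd_add[of k1 f k2 "\<lambda>p. - g p"] ubd_minus[of k2 g] by simp

lemma ubd_const: "ubd P s 0 (\<lambda>p. c)"
  unfolding ubd_def by (intro exI[of _ "\<bar>c\<bar>"]) simp

lemma ubd_cong: "ubd P s k f \<Longrightarrow> (\<And>p. p \<in> P \<Longrightarrow> f p = g p) \<Longrightarrow> ubd P s k g"
  unfolding ubd_def by simp

lemma ubd_atom: "(\<And>p. p \<in> P \<Longrightarrow> \<bar>f p\<bar> \<le> c * s p ^ k) \<Longrightarrow> ubd P s k f"
  unfolding ubd_def by blast

lemma ubd_div:
  assumes "ubd P s k f" "\<And>p. p \<in> P \<Longrightarrow> \<bar>g p\<bar> \<ge> d * s p ^ m" "d > 0" "m \<le> k"
  shows "ubd P s (k - m) (\<lambda>p. f p / g p)"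
proof -
  obtain c where c: "c \<ge> 0" "\<forall>p\<in>P. \<bar>f p\<bar> \<le> c * s p ^ k" using ubd_pos assms(1) by meson
  have "\<forall>p\<in>P. \<bar>f p / g p\<bar> \<le> (c/d) * s p ^ (k-m)"
  proof
    fix p assume p: "p \<in> P"
    have spp: "s p > 0" using sp p by auto
    have gp: "\<bar>g p\<bar> \<ge> d * s p ^ m" using assms(2) p by auto
    have dp: "d * s p ^ m > 0" using assms(3) spp by simp
    have kk: "s p ^ k = s p ^ (k-m) * s p ^ m" using assms(4) by (simp add: power_add[symmetric])
    have "(c/d * s p ^ (k-m)) * (d * s p ^ m) = c * s p ^ k" using assms(3) kk by simp
    hence "\<bar>f p\<bar> \<le> (c/d * s p ^ (k-m)) * (d * s p ^ m)" using c p by simp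
    also have "... \<le> (c/d * s p ^ (k-m)) * \<bar>g p\<bar>" using gp c assms(3) spp by (intro mult_left_mono) auto
    finally have "\<bar>f p\<bar> \<le> (c/d * s p ^ (k-m)) * \<bar>g p\<bar>" .
    moreover have "\<bar>g p\<bar> > 0" using gp dp by linarith
    ultimately show "\<bar>f p / g p\<bar> \<le> (c/d) * s p ^ (k-m)" by (simp add: abs_divide divide_le_eq)
  qed
  thus ?thesis unfolding ubd_def by blast
qed

lemma ubd_get: "ubd P s k f \<Longrightarrow> \<exists>c\<ge>0. \<forall>p\<in>P. \<bar>f p\<bar> \<le> c * s p ^ k"
  by (rule ubd_pos)

lemmas ubd_rules = ubd_mult ubd_add ubd_diff ubd_minus ubd_const

end

locale bnd_ctx = ubd_ctx P s for P :: "'p set" and s +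
  fixes tt dtt :: "3 \<Rightarrow> 3 \<Rightarrow> 'p \<Rightarrow> real" and A B A1 B1 :: "'p \<Rightarrow> real" and L :: "3 \<Rightarrow> 'p \<Rightarrow> real"
    and Ka Kb :: real
  assumes hA: "\<And>p. p \<in> P \<Longrightarrow> \<bar>A p\<bar> \<le> 1 * s p ^ 2"
    and hB: "\<And>p. p \<in> P \<Longrightarrow> \<bar>B p\<bar> \<le> 1 * s p ^ 3"
    and hA1: "\<And>p. p \<in> P \<Longrightarrow> \<bar>A1 p\<bar> \<le> Ka * s p ^ 1"
    and hB1: "\<And>p. p \<in> P \<Longrightarrow> \<bar>B1 p\<bar> \<le> Kb * s p ^ 2"
    and hT11: "\<And>p. p \<in> P \<Longrightarrow> \<bar>tt 1 1 p\<bar> \<le> 3 * s p ^ 2"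
    and hT21: "\<And>p. p \<in> P \<Longrightarrow> \<bar>tt 2 1 p\<bar> \<le> 3 * s p ^ 1"
    and hT31: "\<And>p. p \<in> P \<Longrightarrow> \<bar>tt 3 1 p\<bar> \<le> 3 * s p ^ 0"
    and hT12: "\<And>p. p \<in> P \<Longrightarrow> \<bar>tt 1 2 p\<bar> \<le> 3 * s p ^ 3"
    and hT22: "\<And>p. p \<in> P \<Longrightarrow> \<bar>tt 2 2 p\<bar> \<le> 3 * s p ^ 0"
    and hT32: "\<And>p. p \<in> P \<Longrightarrow> \<bar>tt 3 2 p\<bar> \<le> 3 * s p ^ 1"
    and hT13: "\<And>p. p \<in> P \<Longrightarrow> \<bar>tt 1 3 p\<bar> \<le> 3 * s p ^ 0"
    and hT23: "\<And>p. p \<in> P \<Longrightarrow> \<bar>tt 2 3 p\<bar> \<le> 3 * s p ^ 5"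
    and hT33: "\<And>p. p \<in> P \<Longrightarrow> \<bar>tt 3 3 p\<bar> \<le> 3 * s p ^ 2"
    and g12: "\<And>p. p \<in> P \<Longrightarrow> L 2 p - L 1 p \<ge> 1 * s p ^ 2"
    and g13: "\<And>p. p \<in> P \<Longrightarrow> L 3 p - L 1 p \<ge> 2 * s p ^ 0"
    and g23: "\<And>p. p \<in> P \<Longrightarrow> L 3 p - L 2 p \<ge> 2 * s p ^ 0"
    and K12: "\<And>p. p \<in> P \<Longrightarrow> (L 2 p - L 1 p) * (tt 1 1 p * dtt 1 2 p + tt 2 1 p * dtt 2 2 p + tt 3 1 p * dtt 3 2 p) = tt 1 1 p * (- A1 p * tt 3 2 p) + tt 2 1 p * (2 * A1 p * tt 2 2 p + 3 * B1 p * tt 3 2 p) + tt 3 1 p * (- A1 p * tt 1 2 p + 3 * B1 p * tt 2 2 p + 2 * A p * A1 p * tt 3 2 p)"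
    and K21: "\<And>p. p \<in> P \<Longrightarrow> (L 1 p - L 2 p) * (tt 1 2 p * dtt 1 1 p + tt 2 2 p * dtt 2 1 p + tt 3 2 p * dtt 3 1 p) = tt 1 2 p * (- A1 p * tt 3 1 p) + tt 2 2 p * (2 * A1 p * tt 2 1 p + 3 * B1 p * tt 3 1 p) + tt 3 2 p * (- A1 p * tt 1 1 p + 3 * B1 p * tt 2 1 p + 2 * A p * A1 p * tt 3 1 p)"
    and K13: "\<And>p. p \<in> P \<Longrightarrow> (L 3 p - L 1 p) * (tt 1 1 p * dtt 1 3 p + tt 2 1 p * dtt 2 3 p + tt 3 1 p * dtt 3 3 p) = tt 1 1 p * (- A1 p * tt 3 3 p) + tt 2 1 p * (2 * A1 p * tt 2 3 p + 3 * B1 p * tt 3 3 p) + tt 3 1 p * (- A1 p * tt 1 3 p + 3 * B1 p * tt 2 3 p + 2 * A p * A1 p * tt 3 3 p)"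
    and K31: "\<And>p. p \<in> P \<Longrightarrow> (L 1 p - L 3 p) * (tt 1 3 p * dtt 1 1 p + tt 2 3 p * dtt 2 1 p + tt 3 3 p * dtt 3 1 p) = tt 1 3 p * (- A1 p * tt 3 1 p) + tt 2 3 p * (2 * A1 p * tt 2 1 p + 3 * B1 p * tt 3 1 p) + tt 3 3 p * (- A1 p * tt 1 1 p + 3 * B1 p * tt 2 1 p + 2 * A p * A1 p * tt 3 1 p)"
    and K23: "\<And>p. p \<in> P \<Longrightarrow> (L 3 p - L 2 p) * (tt 1 2 p * dtt 1 3 p + tt 2 2 p * dtt 2 3 p + tt 3 2 p * dtt 3 3 p) = tt 1 2 p * (- A1 p * tt 3 3 p) + tt 2 2 p * (2 * A1 p * tt 2 3 p + 3 * B1 p * tt 3 3 p) + tt 3 2 p * (- A1 p * tt 1 3 p + 3 * B1 p * tt 2 3 p + 2 * A p * A1 p * tt 3 3 p)"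
    and K32: "\<And>p. p \<in> P \<Longrightarrow> (L 2 p - L 3 p) * (tt 1 3 p * dtt 1 2 p + tt 2 3 p * dtt 2 2 p + tt 3 3 p * dtt 3 2 p) = tt 1 3 p * (- A1 p * tt 3 2 p) + tt 2 3 p * (2 * A1 p * tt 2 2 p + 3 * B1 p * tt 3 2 p) + tt 3 3 p * (- A1 p * tt 1 2 p + 3 * B1 p * tt 2 2 p + 2 * A p * A1 p * tt 3 2 p)"
    and U1: "\<And>p. p \<in> P \<Longrightarrow> (tt 1 1 p * dtt 1 1 p + tt 2 1 p * dtt 2 1 p + tt 3 1 p * dtt 3 1 p) = 0"
    and U2: "\<And>p. p \<in> P \<Longrightarrow> (tt 1 2 p * dtt 1 2 p + tt 2 2 p * dtt 2 2 p + tt 3 2 p * dtt 3 2 p) = 0"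
    and U3: "\<And>p. p \<in> P \<Longrightarrow> (tt 1 3 p * dtt 1 3 p + tt 2 3 p * dtt 2 3 p + tt 3 3 p * dtt 3 3 p) = 0"
    and X11: "\<And>p. p \<in> P \<Longrightarrow> dtt 1 1 p = (tt 1 1 p * dtt 1 1 p + tt 2 1 p * dtt 2 1 p + tt 3 1 p * dtt 3 1 p) * tt 1 1 p + (tt 1 2 p * dtt 1 1 p + tt 2 2 p * dtt 2 1 p + tt 3 2 p * dtt 3 1 p) * tt 1 2 p + (tt 1 3 p * dtt 1 1 p + tt 2 3 p * dtt 2 1 p + tt 3 3 p * dtt 3 1 p) * tt 1 3 p"
    and X12: "\<And>p. p \<in> P \<Longrightarrow> dtt 1 2 p = (tt 1 1 p * dtt 1 2 p + tt 2 1 p * dtt 2 2 p + tt 3 1 p * dtt 3 2 p) * tt 1 1 p + (tt 1 2 p * dtt 1 2 p + tt 2 2 p * dtt 2 2 p + tt 3 2 p * dtt 3 2 p) * tt 1 2 p + (tt 1 3 p * dtt 1 2 p + tt 2 3 p * dtt 2 2 p + tt 3 3 p * dtt 3 2 p) * tt 1 3 p"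
    and X13: "\<And>p. p \<in> P \<Longrightarrow> dtt 1 3 p = (tt 1 1 p * dtt 1 3 p + tt 2 1 p * dtt 2 3 p + tt 3 1 p * dtt 3 3 p) * tt 1 1 p + (tt 1 2 p * dtt 1 3 p + tt 2 2 p * dtt 2 3 p + tt 3 2 p * dtt 3 3 p) * tt 1 2 p + (tt 1 3 p * dtt 1 3 p + tt 2 3 p * dtt 2 3 p + tt 3 3 p * dtt 3 3 p) * tt 1 3 p"
    and X21: "\<And>p. p \<in> P \<Longrightarrow> dtt 2 1 p = (tt 1 1 p * dtt 1 1 p + tt 2 1 p * dtt 2 1 p + tt 3 1 p * dtt 3 1 p) * tt 2 1 p + (tt 1 2 p * dtt 1 1 p + tt 2 2 p * dtt 2 1 p + tt 3 2 p * dtt 3 1 p) * tt 2 2 p + (tt 1 3 p * dtt 1 1 p + tt 2 3 p * dtt 2 1 p + tt 3 3 p * dtt 3 1 p) * tt 2 3 p"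
    and X22: "\<And>p. p \<in> P \<Longrightarrow> dtt 2 2 p = (tt 1 1 p * dtt 1 2 p + tt 2 1 p * dtt 2 2 p + tt 3 1 p * dtt 3 2 p) * tt 2 1 p + (tt 1 2 p * dtt 1 2 p + tt 2 2 p * dtt 2 2 p + tt 3 2 p * dtt 3 2 p) * tt 2 2 p + (tt 1 3 p * dtt 1 2 p + tt 2 3 p * dtt 2 2 p + tt 3 3 p * dtt 3 2 p) * tt 2 3 p"
    and X23: "\<And>p. p \<in> P \<Longrightarrow> dtt 2 3 p = (tt 1 1 p * dtt 1 3 p + tt 2 1 p * dtt 2 3 p + tt 3 1 p * dtt 3 3 p) * tt 2 1 p + (tt 1 2 p * dtt 1 3 p + tt 2 2 p * dtt 2 3 p + tt 3 2 p * dtt 3 3 p) * tt 2 2 p + (tt 1 3 p * dtt 1 3 p + tt 2 3 p * dtt 2 3 p + tt 3 3 p * dtt 3 3 p) * tt 2 3 p"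
    and X31: "\<And>p. p \<in> P \<Longrightarrow> dtt 3 1 p = (tt 1 1 p * dtt 1 1 p + tt 2 1 p * dtt 2 1 p + tt 3 1 p * dtt 3 1 p) * tt 3 1 p + (tt 1 2 p * dtt 1 1 p + tt 2 2 p * dtt 2 1 p + tt 3 2 p * dtt 3 1 p) * tt 3 2 p + (tt 1 3 p * dtt 1 1 p + tt 2 3 p * dtt 2 1 p + tt 3 3 p * dtt 3 1 p) * tt 3 3 p"
    and X32: "\<And>p. p \<in> P \<Longrightarrow> dtt 3 2 p = (tt 1 1 p * dtt 1 2 p + tt 2 1 p * dtt 2 2 p + tt 3 1 p * dtt 3 2 p) * tt 3 1 p + (tt 1 2 p * dtt 1 2 p + tt 2 2 p * dtt 2 2 p + tt 3 2 p * dtt 3 2 p) * tt 3 2 p + (tt 1 3 p * dtt 1 2 p + tt 2 3 p * dtt 2 2 p + tt 3 3 p * dtt 3 2 p) * tt 3 3 p"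
    and X33: "\<And>p. p \<in> P \<Longrightarrow> dtt 3 3 p = (tt 1 1 p * dtt 1 3 p + tt 2 1 p * dtt 2 3 p + tt 3 1 p * dtt 3 3 p) * tt 3 1 p + (tt 1 2 p * dtt 1 3 p + tt 2 2 p * dtt 2 3 p + tt 3 2 p * dtt 3 3 p) * tt 3 2 p + (tt 1 3 p * dtt 1 3 p + tt 2 3 p * dtt 2 3 p + tt 3 3 p * dtt 3 3 p) * tt 3 3 p"
begin

definition Kf :: "3 \<Rightarrow> 3 \<Rightarrow> 'p \<Rightarrow> real" where "Kf k j p = tt 1 k p * dtt 1 j p + tt 2 k p * dtt 2 j p + tt 3 k p * dtt 3 j p"

lemma at_hA: "ubd P s 2 A" by (rule ubd_atom) (rule hA)
lemma at_hB: "ubd P s 3 B" by (rule ubd_atom) (rule hB)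
lemma at_hA1: "ubd P s 1 A1" by (rule ubd_atom) (rule hA1)
lemma at_hB1: "ubd P s 2 B1" by (rule ubd_atom) (rule hB1)
lemma at_hT11: "ubd P s 2 (tt 1 1)" by (rule ubd_atom) (rule hT11)
lemma at_hT21: "ubd P s 1 (tt 2 1)" by (rule ubd_atom) (rule hT21)
lemma at_hT31: "ubd P s 0 (tt 3 1)" by (rule ubd_atom) (rule hT31)
lemma at_hT12: "ubd P s 3 (tt 1 2)" by (rule ubd_atom) (rule hT12)
lemma at_hT22: "ubd P s 0 (tt 2 2)" by (rule ubd_atom) (rule hT22)
lemma at_hT32: "ubd P s 1 (tt 3 2)" by (rule ubd_atom) (rule hT32)
lemma at_hT13: "ubd P s 0 (tt 1 3)" by (rule ubd_atom) (rule hT13)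
lemma at_hT23: "ubd P s 5 (tt 2 3)" by (rule ubd_atom) (rule hT23)
lemma at_hT33: "ubd P s 2 (tt 3 3)" by (rule ubd_atom) (rule hT33)
lemmas atoms = at_hA at_hB at_hA1 at_hB1 at_hT11 at_hT21 at_hT31 at_hT12 at_hT22 at_hT32 at_hT13 at_hT23 at_hT33

lemma s_atom: "ubd P s 1 s" by (rule ubd_atom[of _ 1]) (use sp in auto)

lemma num12: "ubd P s 2 (\<lambda>p. tt 1 1 p * (- A1 p * tt 3 2 p) + tt 2 1 p * (2 * A1 p * tt 2 2 p + 3 * B1 p * tt 3 2 p) + tt 3 1 p * (- A1 p * tt 1 2 p + 3 * B1 p * tt 2 2 p + 2 * A p * A1 p * tt 3 2 p))"
  by (rule ubd_weak, (rule ubd_rules atoms)+) simp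

lemma Kb12: "ubd P s 0 (Kf 1 2)"
proof -
  have "ubd P s (2 - 2) (\<lambda>p. (tt 1 1 p * (- A1 p * tt 3 2 p) + tt 2 1 p * (2 * A1 p * tt 2 2 p + 3 * B1 p * tt 3 2 p) + tt 3 1 p * (- A1 p * tt 1 2 p + 3 * B1 p * tt 2 2 p + 2 * A p * A1 p * tt 3 2 p)) / (L 2 p - L 1 p))"
    by (rule ubd_div[OF num12, where d="1" and m="2"]) (use g12 in force)+
  moreover have "\<And>p. p \<in> P \<Longrightarrow> (tt 1 1 p * (- A1 p * tt 3 2 p) + tt 2 1 p * (2 * A1 p * tt 2 2 p + 3 * B1 p * tt 3 2 p) + tt 3 1 p * (- A1 p * tt 1 2 p + 3 * B1 p * tt 2 2 p + 2 * A p * A1 p * tt 3 2 p)) / (L 2 p - L 1 p) = Kf 1 2 p"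
  proof -
    fix p assume p: "p \<in> P"
    have "L 2 p - L 1 p \<noteq> 0" using g12[OF p] sp p by (smt (verit) zero_less_power mult_pos_pos)
    thus "(tt 1 1 p * (- A1 p * tt 3 2 p) + tt 2 1 p * (2 * A1 p * tt 2 2 p + 3 * B1 p * tt 3 2 p) + tt 3 1 p * (- A1 p * tt 1 2 p + 3 * B1 p * tt 2 2 p + 2 * A p * A1 p * tt 3 2 p)) / (L 2 p - L 1 p) = Kf 1 2 p" using K12[OF p] by (simp add: Kf_def field_simps)
  qed
  ultimately show ?thesis by (auto intro: ubd_cong)
qed

lemma num21: "ubd P s 2 (\<lambda>p. tt 1 2 p * (- A1 p * tt 3 1 p) + tt 2 2 p * (2 * A1 p * tt 2 1 p + 3 * B1 p * tt 3 1 p) + tt 3 2 p * (- A1 p * tt 1 1 p + 3 * B1 p * tt 2 1 p + 2 * A p * A1 p * tt 3 1 p))"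
  by (rule ubd_weak, (rule ubd_rules atoms)+) simp

lemma Kb21: "ubd P s 0 (Kf 2 1)"
proof -
  have "ubd P s (2 - 2) (\<lambda>p. (tt 1 2 p * (- A1 p * tt 3 1 p) + tt 2 2 p * (2 * A1 p * tt 2 1 p + 3 * B1 p * tt 3 1 p) + tt 3 2 p * (- A1 p * tt 1 1 p + 3 * B1 p * tt 2 1 p + 2 * A p * A1 p * tt 3 1 p)) / (L 1 p - L 2 p))"
    by (rule ubd_div[OF num21, where d="1" and m="2"]) (use g12 in force)+
  moreover have "\<And>p. p \<in> P \<Longrightarrow> (tt 1 2 p * (- A1 p * tt 3 1 p) + tt 2 2 p * (2 * A1 p * tt 2 1 p + 3 * B1 p * tt 3 1 p) + tt 3 2 p * (- A1 p * tt 1 1 p + 3 * B1 p * tt 2 1 p + 2 * A p * A1 p * tt 3 1 p)) / (L 1 p - L 2 p) = Kf 2 1 p"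
  proof -
    fix p assume p: "p \<in> P"
    have "L 1 p - L 2 p \<noteq> 0" using g12[OF p] sp p by (smt (verit) zero_less_power mult_pos_pos)
    thus "(tt 1 2 p * (- A1 p * tt 3 1 p) + tt 2 2 p * (2 * A1 p * tt 2 1 p + 3 * B1 p * tt 3 1 p) + tt 3 2 p * (- A1 p * tt 1 1 p + 3 * B1 p * tt 2 1 p + 2 * A p * A1 p * tt 3 1 p)) / (L 1 p - L 2 p) = Kf 2 1 p" using K21[OF p] by (simp add: Kf_def field_simps)
  qed
  ultimately show ?thesis by (auto intro: ubd_cong)
qed

lemma num13: "ubd P s 1 (\<lambda>p. tt 1 1 p * (- A1 p * tt 3 3 p) + tt 2 1 p * (2 * A1 p * tt 2 3 p + 3 * B1 p * tt 3 3 p) + tt 3 1 p * (- A1 p * tt 1 3 p + 3 * B1 p * tt 2 3 p + 2 * A p * A1 p * tt 3 3 p))"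
  by (rule ubd_weak, (rule ubd_rules atoms)+) simp

lemma Kb13: "ubd P s 1 (Kf 1 3)"
proof -
  have "ubd P s (1 - 0) (\<lambda>p. (tt 1 1 p * (- A1 p * tt 3 3 p) + tt 2 1 p * (2 * A1 p * tt 2 3 p + 3 * B1 p * tt 3 3 p) + tt 3 1 p * (- A1 p * tt 1 3 p + 3 * B1 p * tt 2 3 p + 2 * A p * A1 p * tt 3 3 p)) / (L 3 p - L 1 p))"
    by (rule ubd_div[OF num13, where d="2" and m="0"]) (use g13 in force)+
  moreover have "\<And>p. p \<in> P \<Longrightarrow> (tt 1 1 p * (- A1 p * tt 3 3 p) + tt 2 1 p * (2 * A1 p * tt 2 3 p + 3 * B1 p * tt 3 3 p) + tt 3 1 p * (- A1 p * tt 1 3 p + 3 * B1 p * tt 2 3 p + 2 * A p * A1 p * tt 3 3 p)) / (L 3 p - L 1 p) = Kf 1 3 p"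
  proof -
    fix p assume p: "p \<in> P"
    have "L 3 p - L 1 p \<noteq> 0" using g13[OF p] sp p by (smt (verit) zero_less_power mult_pos_pos)
    thus "(tt 1 1 p * (- A1 p * tt 3 3 p) + tt 2 1 p * (2 * A1 p * tt 2 3 p + 3 * B1 p * tt 3 3 p) + tt 3 1 p * (- A1 p * tt 1 3 p + 3 * B1 p * tt 2 3 p + 2 * A p * A1 p * tt 3 3 p)) / (L 3 p - L 1 p) = Kf 1 3 p" using K13[OF p] by (simp add: Kf_def field_simps)
  qed
  ultimately show ?thesis by (auto intro: ubd_cong)
qed

lemma num31: "ubd P s 1 (\<lambda>p. tt 1 3 p * (- A1 p * tt 3 1 p) + tt 2 3 p * (2 * A1 p * tt 2 1 p + 3 * B1 p * tt 3 1 p) + tt 3 3 p * (- A1 p * tt 1 1 p + 3 * B1 p * tt 2 1 p + 2 * A p * A1 p * tt 3 1 p))"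
  by (rule ubd_weak, (rule ubd_rules atoms)+) simp

lemma Kb31: "ubd P s 1 (Kf 3 1)"
proof -
  have "ubd P s (1 - 0) (\<lambda>p. (tt 1 3 p * (- A1 p * tt 3 1 p) + tt 2 3 p * (2 * A1 p * tt 2 1 p + 3 * B1 p * tt 3 1 p) + tt 3 3 p * (- A1 p * tt 1 1 p + 3 * B1 p * tt 2 1 p + 2 * A p * A1 p * tt 3 1 p)) / (L 1 p - L 3 p))"
    by (rule ubd_div[OF num31, where d="2" and m="0"]) (use g13 in force)+
  moreover have "\<And>p. p \<in> P \<Longrightarrow> (tt 1 3 p * (- A1 p * tt 3 1 p) + tt 2 3 p * (2 * A1 p * tt 2 1 p + 3 * B1 p * tt 3 1 p) + tt 3 3 p * (- A1 p * tt 1 1 p + 3 * B1 p * tt 2 1 p + 2 * A p * A1 p * tt 3 1 p)) / (L 1 p - L 3 p) = Kf 3 1 p"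
  proof -
    fix p assume p: "p \<in> P"
    have "L 1 p - L 3 p \<noteq> 0" using g13[OF p] sp p by (smt (verit) zero_less_power mult_pos_pos)
    thus "(tt 1 3 p * (- A1 p * tt 3 1 p) + tt 2 3 p * (2 * A1 p * tt 2 1 p + 3 * B1 p * tt 3 1 p) + tt 3 3 p * (- A1 p * tt 1 1 p + 3 * B1 p * tt 2 1 p + 2 * A p * A1 p * tt 3 1 p)) / (L 1 p - L 3 p) = Kf 3 1 p" using K31[OF p] by (simp add: Kf_def field_simps)
  qed
  ultimately show ?thesis by (auto intro: ubd_cong)
qed

lemma num23: "ubd P s 2 (\<lambda>p. tt 1 2 p * (- A1 p * tt 3 3 p) + tt 2 2 p * (2 * A1 p * tt 2 3 p + 3 * B1 p * tt 3 3 p) + tt 3 2 p * (- A1 p * tt 1 3 p + 3 * B1 p * tt 2 3 p + 2 * A p * A1 p * tt 3 3 p))"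
  by (rule ubd_weak, (rule ubd_rules atoms)+) simp

lemma Kb23: "ubd P s 2 (Kf 2 3)"
proof -
  have "ubd P s (2 - 0) (\<lambda>p. (tt 1 2 p * (- A1 p * tt 3 3 p) + tt 2 2 p * (2 * A1 p * tt 2 3 p + 3 * B1 p * tt 3 3 p) + tt 3 2 p * (- A1 p * tt 1 3 p + 3 * B1 p * tt 2 3 p + 2 * A p * A1 p * tt 3 3 p)) / (L 3 p - L 2 p))"
    by (rule ubd_div[OF num23, where d="2" and m="0"]) (use g23 in force)+
  moreover have "\<And>p. p \<in> P \<Longrightarrow> (tt 1 2 p * (- A1 p * tt 3 3 p) + tt 2 2 p * (2 * A1 p * tt 2 3 p + 3 * B1 p * tt 3 3 p) + tt 3 2 p * (- A1 p * tt 1 3 p + 3 * B1 p * tt 2 3 p + 2 * A p * A1 p * tt 3 3 p)) / (L 3 p - L 2 p) = Kf 2 3 p"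
  proof -
    fix p assume p: "p \<in> P"
    have "L 3 p - L 2 p \<noteq> 0" using g23[OF p] sp p by (smt (verit) zero_less_power mult_pos_pos)
    thus "(tt 1 2 p * (- A1 p * tt 3 3 p) + tt 2 2 p * (2 * A1 p * tt 2 3 p + 3 * B1 p * tt 3 3 p) + tt 3 2 p * (- A1 p * tt 1 3 p + 3 * B1 p * tt 2 3 p + 2 * A p * A1 p * tt 3 3 p)) / (L 3 p - L 2 p) = Kf 2 3 p" using K23[OF p] by (simp add: Kf_def field_simps)
  qed
  ultimately show ?thesis by (auto intro: ubd_cong)
qed

lemma num32: "ubd P s 2 (\<lambda>p. tt 1 3 p * (- A1 p * tt 3 2 p) + tt 2 3 p * (2 * A1 p * tt 2 2 p + 3 * B1 p * tt 3 2 p) + tt 3 3 p * (- A1 p * tt 1 2 p + 3 * B1 p * tt 2 2 p + 2 * A p * A1 p * tt 3 2 p))"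
  by (rule ubd_weak, (rule ubd_rules atoms)+) simp

lemma Kb32: "ubd P s 2 (Kf 3 2)"
proof -
  have "ubd P s (2 - 0) (\<lambda>p. (tt 1 3 p * (- A1 p * tt 3 2 p) + tt 2 3 p * (2 * A1 p * tt 2 2 p + 3 * B1 p * tt 3 2 p) + tt 3 3 p * (- A1 p * tt 1 2 p + 3 * B1 p * tt 2 2 p + 2 * A p * A1 p * tt 3 2 p)) / (L 2 p - L 3 p))"
    by (rule ubd_div[OF num32, where d="2" and m="0"]) (use g23 in force)+
  moreover have "\<And>p. p \<in> P \<Longrightarrow> (tt 1 3 p * (- A1 p * tt 3 2 p) + tt 2 3 p * (2 * A1 p * tt 2 2 p + 3 * B1 p * tt 3 2 p) + tt 3 3 p * (- A1 p * tt 1 2 p + 3 * B1 p * tt 2 2 p + 2 * A p * A1 p * tt 3 2 p)) / (L 2 p - L 3 p) = Kf 3 2 p"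
  proof -
    fix p assume p: "p \<in> P"
    have "L 2 p - L 3 p \<noteq> 0" using g23[OF p] sp p by (smt (verit) zero_less_power mult_pos_pos)
    thus "(tt 1 3 p * (- A1 p * tt 3 2 p) + tt 2 3 p * (2 * A1 p * tt 2 2 p + 3 * B1 p * tt 3 2 p) + tt 3 3 p * (- A1 p * tt 1 2 p + 3 * B1 p * tt 2 2 p + 2 * A p * A1 p * tt 3 2 p)) / (L 2 p - L 3 p) = Kf 3 2 p" using K32[OF p] by (simp add: Kf_def field_simps)
  qed
  ultimately show ?thesis by (auto intro: ubd_cong)
qed

lemma Kz1: "ubd P s 10 (Kf 1 1)"
  by (rule ubd_atom[of _ 0]) (simp add: Kf_def U1)

lemma Kz2: "ubd P s 10 (Kf 2 2)"
  by (rule ubd_atom[of _ 0]) (simp add: Kf_def U2)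

lemma Kz3: "ubd P s 10 (Kf 3 3)"
  by (rule ubd_atom[of _ 0]) (simp add: Kf_def U3)

lemmas Katoms = Kb12 Kb21 Kb13 Kb31 Kb23 Kb32 Kz1 Kz2 Kz3

lemma db11: "ubd P s 1 (dtt 1 1)"
proof -
  have "ubd P s 1 (\<lambda>p. Kf 1 1 p * tt 1 1 p + Kf 2 1 p * tt 1 2 p + Kf 3 1 p * tt 1 3 p)"
    by (rule ubd_weak, (rule ubd_rules atoms Katoms)+) simp
  thus ?thesis by (rule ubd_cong) (simp only: Kf_def, rule X11[symmetric], assumption)
qed

lemma db21: "ubd P s 0 (dtt 2 1)"
proof -
  have "ubd P s 0 (\<lambda>p. Kf 1 1 p * tt 2 1 p + Kf 2 1 p * tt 2 2 p + Kf 3 1 p * tt 2 3 p)"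
    by (rule ubd_weak, (rule ubd_rules atoms Katoms)+) simp
  thus ?thesis by (rule ubd_cong) (simp only: Kf_def, rule X21[symmetric], assumption)
qed

lemma db31: "ubd P s 1 (dtt 3 1)"
proof -
  have "ubd P s 1 (\<lambda>p. Kf 1 1 p * tt 3 1 p + Kf 2 1 p * tt 3 2 p + Kf 3 1 p * tt 3 3 p)"
    by (rule ubd_weak, (rule ubd_rules atoms Katoms)+) simp
  thus ?thesis by (rule ubd_cong) (simp only: Kf_def, rule X31[symmetric], assumption)
qed

lemma db12: "ubd P s 2 (dtt 1 2)"
proof -
  have "ubd P s 2 (\<lambda>p. Kf 1 2 p * tt 1 1 p + Kf 2 2 p * tt 1 2 p + Kf 3 2 p * tt 1 3 p)"
    by (rule ubd_weak, (rule ubd_rules atoms Katoms)+) simp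
  thus ?thesis by (rule ubd_cong) (simp only: Kf_def, rule X12[symmetric], assumption)
qed

lemma db22: "ubd P s 1 (dtt 2 2)"
proof -
  have "ubd P s 1 (\<lambda>p. Kf 1 2 p * tt 2 1 p + Kf 2 2 p * tt 2 2 p + Kf 3 2 p * tt 2 3 p)"
    by (rule ubd_weak, (rule ubd_rules atoms Katoms)+) simp
  thus ?thesis by (rule ubd_cong) (simp only: Kf_def, rule X22[symmetric], assumption)
qed

lemma db32: "ubd P s 0 (dtt 3 2)"
proof -
  have "ubd P s 0 (\<lambda>p. Kf 1 2 p * tt 3 1 p + Kf 2 2 p * tt 3 2 p + Kf 3 2 p * tt 3 3 p)"
    by (rule ubd_weak, (rule ubd_rules atoms Katoms)+) simp
  thus ?thesis by (rule ubd_cong) (simp only: Kf_def, rule X32[symmetric], assumption)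
qed

lemma db13: "ubd P s 3 (dtt 1 3)"
proof -
  have "ubd P s 3 (\<lambda>p. Kf 1 3 p * tt 1 1 p + Kf 2 3 p * tt 1 2 p + Kf 3 3 p * tt 1 3 p)"
    by (rule ubd_weak, (rule ubd_rules atoms Katoms)+) simp
  thus ?thesis by (rule ubd_cong) (simp only: Kf_def, rule X13[symmetric], assumption)
qed

lemma db23: "ubd P s 2 (dtt 2 3)"
proof -
  have "ubd P s 2 (\<lambda>p. Kf 1 3 p * tt 2 1 p + Kf 2 3 p * tt 2 2 p + Kf 3 3 p * tt 2 3 p)"
    by (rule ubd_weak, (rule ubd_rules atoms Katoms)+) simp
  thus ?thesis by (rule ubd_cong) (simp only: Kf_def, rule X23[symmetric], assumption)
qed

lemma db33: "ubd P s 1 (dtt 3 3)"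
proof -
  have "ubd P s 1 (\<lambda>p. Kf 1 3 p * tt 3 1 p + Kf 2 3 p * tt 3 2 p + Kf 3 3 p * tt 3 3 p)"
    by (rule ubd_weak, (rule ubd_rules atoms Katoms)+) simp
  thus ?thesis by (rule ubd_cong) (simp only: Kf_def, rule X33[symmetric], assumption)
qed

lemmas datoms = db11 db21 db31 db12 db22 db32 db13 db23 db33

lemma cA11: "ubd P s 1 (\<lambda>p. tt 1 1 p * (A p * tt 2 1 p + B p * tt 3 1 p) + tt 2 1 p * tt 1 1 p + tt 3 1 p * tt 2 1 p)"
  by (rule ubd_weak, (rule ubd_rules atoms)+) simp

lemma cA12: "ubd P s 0 (\<lambda>p. tt 1 1 p * (A p * tt 2 2 p + B p * tt 3 2 p) + tt 2 1 p * tt 1 2 p + tt 3 1 p * tt 2 2 p)"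
  by (rule ubd_weak, (rule ubd_rules atoms)+) simp

lemma cA13: "ubd P s 1 (\<lambda>p. tt 1 1 p * (A p * tt 2 3 p + B p * tt 3 3 p) + tt 2 1 p * tt 1 3 p + tt 3 1 p * tt 2 3 p)"
  by (rule ubd_weak, (rule ubd_rules atoms)+) simp

lemma cA21: "ubd P s 2 (\<lambda>p. tt 1 2 p * (A p * tt 2 1 p + B p * tt 3 1 p) + tt 2 2 p * tt 1 1 p + tt 3 2 p * tt 2 1 p)"
  by (rule ubd_weak, (rule ubd_rules atoms)+) simp

lemma cA22: "ubd P s 1 (\<lambda>p. tt 1 2 p * (A p * tt 2 2 p + B p * tt 3 2 p) + tt 2 2 p * tt 1 2 p + tt 3 2 p * tt 2 2 p)"
  by (rule ubd_weak, (rule ubd_rules atoms)+) simp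

lemma cA23: "ubd P s 0 (\<lambda>p. tt 1 2 p * (A p * tt 2 3 p + B p * tt 3 3 p) + tt 2 2 p * tt 1 3 p + tt 3 2 p * tt 2 3 p)"
  by (rule ubd_weak, (rule ubd_rules atoms)+) simp

lemma cA31: "ubd P s 3 (\<lambda>p. tt 1 3 p * (A p * tt 2 1 p + B p * tt 3 1 p) + tt 2 3 p * tt 1 1 p + tt 3 3 p * tt 2 1 p)"
  by (rule ubd_weak, (rule ubd_rules atoms)+) simp

lemma cA32: "ubd P s 2 (\<lambda>p. tt 1 3 p * (A p * tt 2 2 p + B p * tt 3 2 p) + tt 2 3 p * tt 1 2 p + tt 3 3 p * tt 2 2 p)"
  by (rule ubd_weak, (rule ubd_rules atoms)+) simp

lemma cA33: "ubd P s 5 (\<lambda>p. tt 1 3 p * (A p * tt 2 3 p + B p * tt 3 3 p) + tt 2 3 p * tt 1 3 p + tt 3 3 p * tt 2 3 p)"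
  by (rule ubd_weak, (rule ubd_rules atoms)+) simp

lemma dA11: "ubd P s 0 (\<lambda>p. dtt 1 1 p * (A p * tt 2 1 p + B p * tt 3 1 p) + tt 1 1 p * (A1 p * tt 2 1 p + A p * dtt 2 1 p + B1 p * tt 3 1 p + B p * dtt 3 1 p) + dtt 2 1 p * tt 1 1 p + tt 2 1 p * dtt 1 1 p + dtt 3 1 p * tt 2 1 p + tt 3 1 p * dtt 2 1 p)"
  by (rule ubd_weak, (rule ubd_rules atoms datoms)+) simp

lemma dA12: "ubd P s 0 (\<lambda>p. s p * (dtt 1 1 p * (A p * tt 2 2 p + B p * tt 3 2 p) + tt 1 1 p * (A1 p * tt 2 2 p + A p * dtt 2 2 p + B1 p * tt 3 2 p + B p * dtt 3 2 p) + dtt 2 1 p * tt 1 2 p + tt 2 1 p * dtt 1 2 p + dtt 3 1 p * tt 2 2 p + tt 3 1 p * dtt 2 2 p))"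
  by (rule ubd_weak, (rule ubd_rules atoms datoms s_atom)+) simp

lemma dA13: "ubd P s 0 (\<lambda>p. dtt 1 1 p * (A p * tt 2 3 p + B p * tt 3 3 p) + tt 1 1 p * (A1 p * tt 2 3 p + A p * dtt 2 3 p + B1 p * tt 3 3 p + B p * dtt 3 3 p) + dtt 2 1 p * tt 1 3 p + tt 2 1 p * dtt 1 3 p + dtt 3 1 p * tt 2 3 p + tt 3 1 p * dtt 2 3 p)"
  by (rule ubd_weak, (rule ubd_rules atoms datoms)+) simp

lemma dA21: "ubd P s 1 (\<lambda>p. dtt 1 2 p * (A p * tt 2 1 p + B p * tt 3 1 p) + tt 1 2 p * (A1 p * tt 2 1 p + A p * dtt 2 1 p + B1 p * tt 3 1 p + B p * dtt 3 1 p) + dtt 2 2 p * tt 1 1 p + tt 2 2 p * dtt 1 1 p + dtt 3 2 p * tt 2 1 p + tt 3 2 p * dtt 2 1 p)"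
  by (rule ubd_weak, (rule ubd_rules atoms datoms)+) simp

lemma dA22: "ubd P s 0 (\<lambda>p. dtt 1 2 p * (A p * tt 2 2 p + B p * tt 3 2 p) + tt 1 2 p * (A1 p * tt 2 2 p + A p * dtt 2 2 p + B1 p * tt 3 2 p + B p * dtt 3 2 p) + dtt 2 2 p * tt 1 2 p + tt 2 2 p * dtt 1 2 p + dtt 3 2 p * tt 2 2 p + tt 3 2 p * dtt 2 2 p)"
  by (rule ubd_weak, (rule ubd_rules atoms datoms)+) simp

lemma dA23: "ubd P s 0 (\<lambda>p. s p * (dtt 1 2 p * (A p * tt 2 3 p + B p * tt 3 3 p) + tt 1 2 p * (A1 p * tt 2 3 p + A p * dtt 2 3 p + B1 p * tt 3 3 p + B p * dtt 3 3 p) + dtt 2 2 p * tt 1 3 p + tt 2 2 p * dtt 1 3 p + dtt 3 2 p * tt 2 3 p + tt 3 2 p * dtt 2 3 p))"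
  by (rule ubd_weak, (rule ubd_rules atoms datoms s_atom)+) simp

lemma dA31: "ubd P s 2 (\<lambda>p. dtt 1 3 p * (A p * tt 2 1 p + B p * tt 3 1 p) + tt 1 3 p * (A1 p * tt 2 1 p + A p * dtt 2 1 p + B1 p * tt 3 1 p + B p * dtt 3 1 p) + dtt 2 3 p * tt 1 1 p + tt 2 3 p * dtt 1 1 p + dtt 3 3 p * tt 2 1 p + tt 3 3 p * dtt 2 1 p)"
  by (rule ubd_weak, (rule ubd_rules atoms datoms)+) simp

lemma dA32: "ubd P s 1 (\<lambda>p. dtt 1 3 p * (A p * tt 2 2 p + B p * tt 3 2 p) + tt 1 3 p * (A1 p * tt 2 2 p + A p * dtt 2 2 p + B1 p * tt 3 2 p + B p * dtt 3 2 p) + dtt 2 3 p * tt 1 2 p + tt 2 3 p * dtt 1 2 p + dtt 3 3 p * tt 2 2 p + tt 3 3 p * dtt 2 2 p)"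
  by (rule ubd_weak, (rule ubd_rules atoms datoms)+) simp

lemma dA33: "ubd P s 1 (\<lambda>p. dtt 1 3 p * (A p * tt 2 3 p + B p * tt 3 3 p) + tt 1 3 p * (A1 p * tt 2 3 p + A p * dtt 2 3 p + B1 p * tt 3 3 p + B p * dtt 3 3 p) + dtt 2 3 p * tt 1 3 p + tt 2 3 p * dtt 1 3 p + dtt 3 3 p * tt 2 3 p + tt 3 3 p * dtt 2 3 p)"
  by (rule ubd_weak, (rule ubd_rules atoms datoms)+) simp

end

lemma sb_props:
  assumes "smooth_bdd D f"
  shows "continuous_on D (\<lambda>p. f (fst p) (snd p))" "\<exists>B. \<forall>p\<in>D. \<bar>f (fst p) (snd p)\<bar> \<le> B"
    "\<exists>fx. (\<forall>(t,x)\<in>D. ((\<lambda>y. f t y) has_real_derivative fx t x) (at x)) \<and> smooth_bdd D fx"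
proof -
  from assms obtain ft fx where h: "continuous_on D (\<lambda>p. f (fst p) (snd p))"
    "\<exists>B. \<forall>p\<in>D. \<bar>f (fst p) (snd p)\<bar> \<le> B"
    "\<forall>(t,x)\<in>D. ((\<lambda>y. f t y) has_real_derivative fx t x) (at x)" "smooth_bdd D fx"
    by (cases rule: smooth_bdd.cases) blast
  thus "continuous_on D (\<lambda>p. f (fst p) (snd p))" "\<exists>B. \<forall>p\<in>D. \<bar>f (fst p) (snd p)\<bar> \<le> B"
    "\<exists>fx. (\<forall>(t,x)\<in>D. ((\<lambda>y. f t y) has_real_derivative fx t x) (at x)) \<and> smooth_bdd D fx" by blast+
qed

lemma spow: "0 < (A::real) \<Longrightarrow> sqrt A ^ 2 = A \<and> sqrt A ^ 3 = A powr (3/2) \<and> sqrt A ^ 5 = A powr (5/2)"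
proof -
  assume A: "0 < A"
  have "sqrt A ^ 2 = A" using A by simp
  have "sqrt A = A powr (1/2)" using A by (simp add: powr_half_sqrt)
  moreover have "(A powr (1/2)) ^ 3 = A powr (3/2)" "(A powr (1/2)) ^ 5 = A powr (5/2)"
    using A by (simp_all add: powr_power)
  ultimately show ?thesis using A \<open>sqrt A ^ 2 = A\<close> by simp
qed

theorem lemma3p2:
  fixes a b :: "real \<Rightarrow> real \<Rightarrow> real" and W :: "real set" and c Tm :: real
  assumes W: "open W" "is_interval W" "0 \<in> W"
    and cT: "c > 0" "Tm > 0"
    and sa: "smooth_bdd ({-c<..<Tm} \<times> W) a"
    and sb: "smooth_bdd ({-c<..<Tm} \<times> W) b"
    and disc: "\<forall>t\<in>{0..<Tm}. \<forall>x\<in>W. 4 * (a t x)^3 - 27 * (b t x)^2 \<ge> 0"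
    and a00: "a 0 0 = 0"
    and apos: "\<forall>t\<in>{0<..<Tm}. \<forall>x\<in>W. a t x > 0"
  shows "\<exists>U C. open U \<and> (0, 0) \<in> U \<and> C > 0 \<and>
    (\<forall>(t, x)\<in>U. t > 0 \<longrightarrow>
      (let M = calA (a t x) (b t x);
           Mx = (\<lambda>i j g. \<exists>D. ((\<lambda>y. calA (a t y) (b t y) $ i $ j) has_real_derivative D) (at x)
                                \<and> \<bar>D\<bar> \<le> C * g);
           A = a t x
       in card (eigvals (Smat (a t x) (b t x))) = 3 \<and>
          \<bar>M$1$1\<bar> \<le> C * sqrt A \<and> \<bar>M$1$2\<bar> \<le> C \<and> \<bar>M$1$3\<bar> \<le> C * sqrt A \<and>
          \<bar>M$2$1\<bar> \<le> C * A \<and> \<bar>M$2$2\<bar> \<le> C * sqrt A \<and> \<bar>M$2$3\<bar> \<le> C \<and>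
          \<bar>M$3$1\<bar> \<le> C * A powr (3/2) \<and> \<bar>M$3$2\<bar> \<le> C * A \<and> \<bar>M$3$3\<bar> \<le> C * A powr (5/2) \<and>
          Mx 1 1 1 \<and> Mx 1 2 (1 / sqrt A) \<and> Mx 1 3 1 \<and>
          Mx 2 1 (sqrt A) \<and> Mx 2 2 1 \<and> Mx 2 3 (1 / sqrt A) \<and>
          Mx 3 1 A \<and> Mx 3 2 (sqrt A) \<and> Mx 3 3 (sqrt A)))"
proof -
  define D where "D = {-c<..<Tm} \<times> W"
  have oD: "open D" unfolding D_def using W by (intro open_Times) auto
  obtain ax where ax: "\<forall>(t,x)\<in>D. ((\<lambda>y. a t y) has_real_derivative ax t x) (at x)" and sax: "smooth_bdd D ax"
    using sb_props(3)[OF sa[folded D_def]] by blast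
  obtain axx where axx: "\<forall>(t,x)\<in>D. ((\<lambda>y. ax t y) has_real_derivative axx t x) (at x)" and saxx: "smooth_bdd D axx"
    using sb_props(3)[OF sax] by blast
  obtain M2' where M2': "\<forall>p\<in>D. \<bar>axx (fst p) (snd p)\<bar> \<le> M2'" using sb_props(2)[OF saxx] by blast
  define M2 where "M2 = max M2' 0"
  obtain bx where bx: "\<forall>(t,x)\<in>D. ((\<lambda>y. b t y) has_real_derivative bx t x) (at x)" and sbx: "smooth_bdd D bx"
    using sb_props(3)[OF sb[folded D_def]] by blast
  obtain bxx where bxx: "\<forall>(t,x)\<in>D. ((\<lambda>y. bx t y) has_real_derivative bxx t x) (at x)" and sbxx: "smooth_bdd D bxx"
    using sb_props(3)[OF sbx] by blast
  obtain bxxx where bxxx: "\<forall>(t,x)\<in>D. ((\<lambda>y. bxx t y) has_real_derivative bxxx t x) (at x)" and sbxxx: "smooth_bdd D bxxx"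
    using sb_props(3)[OF sbxx] by blast
  obtain M3' where M3': "\<forall>p\<in>D. \<bar>bxxx (fst p) (snd p)\<bar> \<le> M3'" using sb_props(2)[OF sbxxx] by blast
  define M3 where "M3 = max M3' 0"
  have M23: "M2 \<ge> 0" "M3 \<ge> 0" by (simp_all add: M2_def M3_def)
  have ca: "continuous_on D (\<lambda>p. a (fst p) (snd p))" using sb_props(1)[OF sa[folded D_def]] .
  obtain e where e: "e > 0" "ball 0 e \<subseteq> W" using W(1,3) open_contains_ball by blast
  have inW: "\<And>y. \<bar>y\<bar> < e \<Longrightarrow> y \<in> W" using e by (auto simp: dist_real_def)
  define r where "r = e/2"
  have r: "r > 0" "2*r = e" using e by (auto simp: r_def)
  define eps where "eps = min (1/100) (r^2)"
  have eps: "eps > 0" "eps \<le> 1/100" "eps \<le> r^2" using r by (auto simp: eps_def)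
  define U where "U = (D \<inter> (\<lambda>p. a (fst p) (snd p)) -` {..<eps}) \<inter> (UNIV \<times> {-r<..<r})"
  have oU: "open U" unfolding U_def
    by (intro open_Int continuous_open_preimage ca oD open_Times) auto
  have U0: "(0,0) \<in> U" unfolding U_def D_def using W cT r eps a00 by auto
  have ptU: "t < Tm \<and> x \<in> W \<and> \<bar>x\<bar> < r \<and> a t x < eps \<and> (t,x) \<in> D" if "(t,x) \<in> U" "t > 0" for t x
    using that unfolding U_def D_def by auto
  have DW: "(t,y) \<in> D" if "t > 0" "t < Tm" "y \<in> W" for t y
    using that cT unfolding D_def by auto
  have goodU: "good (a t x) (b t x)" if "(t,x) \<in> U" "t > 0" for t x
    using ptU[OF that] apos disc that eps unfolding good_def by force
  define Ka where "Ka = 1 + M2/2"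
  define K where "K = 2 + M2"
  define Kb where "Kb = K^2 + M3/6"
  have gl: "\<bar>ax t x\<bar> \<le> Ka * sqrt (a t x) \<and> \<bar>bx t x\<bar> \<le> Kb * sqrt (a t x) ^ 2" if "(t,x) \<in> U" "t > 0" for t x
  proof -
    note pt = ptU[OF that]
    define h where "h = sqrt (a t x)"
    have ap: "a t x > 0" using apos pt that by auto
    have h: "h > 0" "h^2 = a t x" using ap by (auto simp: h_def)
    have "h < r"
    proof -
      have "h^2 < r^2" using h pt eps by linarith
      thus ?thesis using h r by (smt (verit) power_mono)
    qed
    have yW: "y \<in> W" if "x - h \<le> y" "y \<le> x + h" for y
      using inW[of y] that pt \<open>h < r\<close> r by auto
    have yD: "(t,y) \<in> D" if "x - h \<le> y" "y \<le> x + h" for y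
      using DW[OF \<open>t>0\<close>] pt yW that by auto
    have Da: "\<forall>y. x-h \<le> y \<and> y \<le> x+h \<longrightarrow> ((\<lambda>y. a t y) has_real_derivative ax t y) (at y)
        \<and> ((\<lambda>y. ax t y) has_real_derivative axx t y) (at y) \<and> \<bar>axx t y\<bar> \<le> M2"
      using ax axx M2' yD unfolding M2_def by fastforce
    have pos: "a t (x+h) \<ge> 0" "a t (x-h) \<ge> 0" using apos yW h that pt by (auto intro: less_imp_le)
    note GA = glaeser_a[OF h(1) h(2)[symmetric] Da pos]
    have Db: "\<forall>y. x-h \<le> y \<and> y \<le> x+h \<longrightarrow> ((\<lambda>y. b t y) has_real_derivative bx t y) (at y)
        \<and> ((\<lambda>y. bx t y) has_real_derivative bxx t y) (at y)
        \<and> ((\<lambda>y. bxx t y) has_real_derivative bxxx t y) (at y) \<and> \<bar>bxxx t y\<bar> \<le> M3"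
      using bx bxx bxxx M3' yD unfolding M3_def by fastforce
    have d2: "27 * (b t (x+h))^2 \<le> 4 * (a t (x+h))^3" "27 * (b t (x-h))^2 \<le> 4 * (a t (x-h))^3"
      using disc yW h that pt by (auto intro!: less_imp_le)
    have "\<bar>bx t x\<bar> \<le> (K^2 + M3/6) * h^2"
      by (rule glaeser_b[OF h(1) _ Db d2]) (use GA pos M23 in \<open>auto simp: K_def\<close>)
    thus ?thesis using GA unfolding h_def Ka_def Kb_def by simp
  qed
  define P where "P = {p \<in> U. fst p > 0}"
  define s where "s = (\<lambda>p. sqrt (a (fst p) (snd p)))"
  define AA where "AA = (\<lambda>p. a (fst p) (snd p))"
  define BB where "BB = (\<lambda>p. b (fst p) (snd p))"
  define A1 where "A1 = (\<lambda>p. ax (fst p) (snd p))"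
  define B1 where "B1 = (\<lambda>p. bx (fst p) (snd p))"
  define tt where "tt = (\<lambda>(m::3) (j::3) p. Tmat (AA p) (BB p) $ m $ j)"
  define LL where "LL = (\<lambda>(j::3) p. eig (Smat (AA p) (BB p)) (idx j))"
  define Gp where "Gp = (\<lambda>p::real\<times>real. {y. (fst p, y) \<in> U})"
  define dtt where "dtt = (\<lambda>(m::3) (j::3) p. SOME D. ((\<lambda>y. Tmat (a (fst p) y) (b (fst p) y) $ m $ j) has_real_derivative D) (at (snd p)))"
  have Pg: "good (AA p) (BB p)" if "p \<in> P" for p
    using goodU[of "fst p" "snd p"] that unfolding P_def AA_def BB_def by auto
  have Ps: "s p ^ 2 = AA p \<and> 0 < s p \<and> s p \<le> 1" if "p \<in> P" for p
  proof -
    have g: "0 < AA p" "AA p \<le> 1/100" using Pg[OF that] by (auto simp: good_def)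
    have "sqrt (AA p) \<le> sqrt 1" using g by (intro real_sqrt_le_mono) auto
    thus ?thesis using g unfolding s_def AA_def by auto
  qed
  have loc: "open (Gp p) \<and> snd p \<in> Gp p \<and> (\<forall>y\<in>Gp p. good (a (fst p) y) (b (fst p) y))" if p: "p \<in> P" for p
  proof (intro conjI)
    have "Gp p = Pair (fst p) -` U" by (auto simp: Gp_def)
    moreover have "open (Pair (fst p) -` U)" by (rule continuous_open_vimage[OF oU]) (intro continuous_intros)
    ultimately show "open (Gp p)" by simp
    show "snd p \<in> Gp p" using p by (auto simp: Gp_def P_def)
    show "\<forall>y\<in>Gp p. good (a (fst p) y) (b (fst p) y)" using p goodU by (auto simp: Gp_def P_def)
  qed
  have PD: "(fst p, snd p) \<in> D" if "p \<in> P" for p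
    using ptU[of "fst p" "snd p"] that by (auto simp: P_def)
  have dA: "((\<lambda>y. a (fst p) y) has_real_derivative A1 p) (at (snd p))" if "p \<in> P" for p
    using ax PD[OF that] unfolding A1_def by auto
  have dB: "((\<lambda>y. b (fst p) y) has_real_derivative B1 p) (at (snd p))" if "p \<in> P" for p
    using bx PD[OF that] unfolding B1_def by auto
  have dT: "((\<lambda>y. Tmat (a (fst p) y) (b (fst p) y) $ m $ j) has_real_derivative dtt m j p) (at (snd p))"
    if "p \<in> P" for p m j
  proof -
    have "\<exists>D. ((\<lambda>y. Tmat (a (fst p) y) (b (fst p) y) $ m $ j) has_real_derivative D) (at (snd p))"
      using loc[OF that] exhaust_3[of m] exhaust_3[of j] by (intro T_deriv[OF _ _ _ dA[OF that] dB[OF that]]) auto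
    thus ?thesis unfolding dtt_def by (rule someI_ex)
  qed
  note UD = unit_deriv[OF conjunct1[OF loc] conjunct1[OF conjunct2[OF loc]] conjunct2[OF conjunct2[OF loc]] dA dB dT]
  note ED = expand_deriv[OF conjunct1[OF loc] conjunct1[OF conjunct2[OF loc]] conjunct2[OF conjunct2[OF loc]] dA dB dT]
  note KD = K_rel[OF conjunct1[OF loc] conjunct1[OF conjunct2[OF loc]] conjunct2[OF conjunct2[OF loc]] dA dB dT]
  have f_sp: "\<forall>p\<in>P. 0 < s p \<and> s p \<le> 1" using Ps by blast
  have f_hA: "\<And>p. p \<in> P \<Longrightarrow> \<bar>AA p\<bar> \<le> 1 * s p ^ 2"
  proof -
    fix p assume p: "p \<in> P"
    have e: "AA p = s p ^ 2" using Ps[OF p] by simp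
    show "\<bar>AA p\<bar> \<le> 1 * s p ^ 2" unfolding e by simp
  qed
  have f_hB: "\<And>p. p \<in> P \<Longrightarrow> \<bar>BB p\<bar> \<le> 1 * s p ^ 3"
  proof -
    fix p assume p: "p \<in> P"
    have "\<bar>BB p\<bar> \<le> s p ^ 3 / 2" using b_bound[OF Pg[OF p]] unfolding s_def AA_def BB_def by simp
    moreover have "s p ^ 3 \<ge> 0" using Ps[OF p] by simp
    ultimately show "\<bar>BB p\<bar> \<le> 1 * s p ^ 3" by simp
  qed
  have f_hA1: "\<And>p. p \<in> P \<Longrightarrow> \<bar>A1 p\<bar> \<le> Ka * s p ^ 1"
    using gl unfolding P_def A1_def s_def by (auto simp: split_beta)
  have f_hB1: "\<And>p. p \<in> P \<Longrightarrow> \<bar>B1 p\<bar> \<le> Kb * s p ^ 2"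
    using gl unfolding P_def B1_def s_def by (auto simp: split_beta)
  have f_hT11: "\<And>p. p \<in> P \<Longrightarrow> \<bar>tt 1 1 p\<bar> \<le> 3 * s p ^ 2"
    using T_bounds(1)[OF Pg] unfolding tt_def s_def AA_def by simp
  have f_hT21: "\<And>p. p \<in> P \<Longrightarrow> \<bar>tt 2 1 p\<bar> \<le> 3 * s p ^ 1"
    using T_bounds(2)[OF Pg] unfolding tt_def s_def AA_def by simp
  have f_hT31: "\<And>p. p \<in> P \<Longrightarrow> \<bar>tt 3 1 p\<bar> \<le> 3 * s p ^ 0"
    unfolding tt_def by simp (rule order_trans[OF T_le1], simp)
  have f_hT12: "\<And>p. p \<in> P \<Longrightarrow> \<bar>tt 1 2 p\<bar> \<le> 3 * s p ^ 3"
    using T_bounds(3)[OF Pg] unfolding tt_def s_def AA_def by simp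
  have f_hT22: "\<And>p. p \<in> P \<Longrightarrow> \<bar>tt 2 2 p\<bar> \<le> 3 * s p ^ 0"
    unfolding tt_def by simp (rule order_trans[OF T_le1], simp)
  have f_hT32: "\<And>p. p \<in> P \<Longrightarrow> \<bar>tt 3 2 p\<bar> \<le> 3 * s p ^ 1"
    using T_bounds(4)[OF Pg] unfolding tt_def s_def AA_def by simp
  have f_hT13: "\<And>p. p \<in> P \<Longrightarrow> \<bar>tt 1 3 p\<bar> \<le> 3 * s p ^ 0"
    unfolding tt_def by simp (rule order_trans[OF T_le1], simp)
  have f_hT23: "\<And>p. p \<in> P \<Longrightarrow> \<bar>tt 2 3 p\<bar> \<le> 3 * s p ^ 5"
    using T_bounds(5)[OF Pg] unfolding tt_def s_def AA_def by simp
  have f_hT33: "\<And>p. p \<in> P \<Longrightarrow> \<bar>tt 3 3 p\<bar> \<le> 3 * s p ^ 2"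
    using T_bounds(6)[OF Pg] unfolding tt_def s_def AA_def by simp
  have f_g12: "\<And>p. p \<in> P \<Longrightarrow> LL 2 p - LL 1 p \<ge> 1 * s p ^ 2"
    using good_ell(9)[OF Pg] Ps unfolding LL_def by (simp add: idx_def)
  have f_g13: "\<And>p. p \<in> P \<Longrightarrow> LL 3 p - LL 1 p \<ge> 2 * s p ^ 0"
    using good_ell(10)[OF Pg] unfolding LL_def by (simp add: idx_def)
  have f_g23: "\<And>p. p \<in> P \<Longrightarrow> LL 3 p - LL 2 p \<ge> 2 * s p ^ 0"
    using good_ell(11)[OF Pg] unfolding LL_def by (simp add: idx_def)
  have f_K12: "\<And>p. p \<in> P \<Longrightarrow> (LL 2 p - LL 1 p) * (tt 1 1 p * dtt 1 2 p + tt 2 1 p * dtt 2 2 p + tt 3 1 p * dtt 3 2 p) = tt 1 1 p * (- A1 p * tt 3 2 p) + tt 2 1 p * (2 * A1 p * tt 2 2 p + 3 * B1 p * tt 3 2 p) + tt 3 1 p * (- A1 p * tt 1 2 p + 3 * B1 p * tt 2 2 p + 2 * AA p * A1 p * tt 3 2 p)"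
    using KD[of _ 1 2] unfolding LL_def tt_def AA_def BB_def by (simp add: sum_3 split_beta)
  have f_K21: "\<And>p. p \<in> P \<Longrightarrow> (LL 1 p - LL 2 p) * (tt 1 2 p * dtt 1 1 p + tt 2 2 p * dtt 2 1 p + tt 3 2 p * dtt 3 1 p) = tt 1 2 p * (- A1 p * tt 3 1 p) + tt 2 2 p * (2 * A1 p * tt 2 1 p + 3 * B1 p * tt 3 1 p) + tt 3 2 p * (- A1 p * tt 1 1 p + 3 * B1 p * tt 2 1 p + 2 * AA p * A1 p * tt 3 1 p)"
    using KD[of _ 2 1] unfolding LL_def tt_def AA_def BB_def by (simp add: sum_3 split_beta)
  have f_K13: "\<And>p. p \<in> P \<Longrightarrow> (LL 3 p - LL 1 p) * (tt 1 1 p * dtt 1 3 p + tt 2 1 p * dtt 2 3 p + tt 3 1 p * dtt 3 3 p) = tt 1 1 p * (- A1 p * tt 3 3 p) + tt 2 1 p * (2 * A1 p * tt 2 3 p + 3 * B1 p * tt 3 3 p) + tt 3 1 p * (- A1 p * tt 1 3 p + 3 * B1 p * tt 2 3 p + 2 * AA p * A1 p * tt 3 3 p)"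
    using KD[of _ 1 3] unfolding LL_def tt_def AA_def BB_def by (simp add: sum_3 split_beta)
  have f_K31: "\<And>p. p \<in> P \<Longrightarrow> (LL 1 p - LL 3 p) * (tt 1 3 p * dtt 1 1 p + tt 2 3 p * dtt 2 1 p + tt 3 3 p * dtt 3 1 p) = tt 1 3 p * (- A1 p * tt 3 1 p) + tt 2 3 p * (2 * A1 p * tt 2 1 p + 3 * B1 p * tt 3 1 p) + tt 3 3 p * (- A1 p * tt 1 1 p + 3 * B1 p * tt 2 1 p + 2 * AA p * A1 p * tt 3 1 p)"
    using KD[of _ 3 1] unfolding LL_def tt_def AA_def BB_def by (simp add: sum_3 split_beta)
  have f_K23: "\<And>p. p \<in> P \<Longrightarrow> (LL 3 p - LL 2 p) * (tt 1 2 p * dtt 1 3 p + tt 2 2 p * dtt 2 3 p + tt 3 2 p * dtt 3 3 p) = tt 1 2 p * (- A1 p * tt 3 3 p) + tt 2 2 p * (2 * A1 p * tt 2 3 p + 3 * B1 p * tt 3 3 p) + tt 3 2 p * (- A1 p * tt 1 3 p + 3 * B1 p * tt 2 3 p + 2 * AA p * A1 p * tt 3 3 p)"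
    using KD[of _ 2 3] unfolding LL_def tt_def AA_def BB_def by (simp add: sum_3 split_beta)
  have f_K32: "\<And>p. p \<in> P \<Longrightarrow> (LL 2 p - LL 3 p) * (tt 1 3 p * dtt 1 2 p + tt 2 3 p * dtt 2 2 p + tt 3 3 p * dtt 3 2 p) = tt 1 3 p * (- A1 p * tt 3 2 p) + tt 2 3 p * (2 * A1 p * tt 2 2 p + 3 * B1 p * tt 3 2 p) + tt 3 3 p * (- A1 p * tt 1 2 p + 3 * B1 p * tt 2 2 p + 2 * AA p * A1 p * tt 3 2 p)"
    using KD[of _ 3 2] unfolding LL_def tt_def AA_def BB_def by (simp add: sum_3 split_beta)
  have f_U1: "\<And>p. p \<in> P \<Longrightarrow> (tt 1 1 p * dtt 1 1 p + tt 2 1 p * dtt 2 1 p + tt 3 1 p * dtt 3 1 p) = 0"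
    using UD[of _ 1] unfolding tt_def AA_def BB_def by (simp add: sum_3 split_beta)
  have f_U2: "\<And>p. p \<in> P \<Longrightarrow> (tt 1 2 p * dtt 1 2 p + tt 2 2 p * dtt 2 2 p + tt 3 2 p * dtt 3 2 p) = 0"
    using UD[of _ 2] unfolding tt_def AA_def BB_def by (simp add: sum_3 split_beta)
  have f_U3: "\<And>p. p \<in> P \<Longrightarrow> (tt 1 3 p * dtt 1 3 p + tt 2 3 p * dtt 2 3 p + tt 3 3 p * dtt 3 3 p) = 0"
    using UD[of _ 3] unfolding tt_def AA_def BB_def by (simp add: sum_3 split_beta)
  have f_X11: "\<And>p. p \<in> P \<Longrightarrow> dtt 1 1 p = (tt 1 1 p * dtt 1 1 p + tt 2 1 p * dtt 2 1 p + tt 3 1 p * dtt 3 1 p) * tt 1 1 p + (tt 1 2 p * dtt 1 1 p + tt 2 2 p * dtt 2 1 p + tt 3 2 p * dtt 3 1 p) * tt 1 2 p + (tt 1 3 p * dtt 1 1 p + tt 2 3 p * dtt 2 1 p + tt 3 3 p * dtt 3 1 p) * tt 1 3 p"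
    using ED[of _ 1 1] unfolding tt_def AA_def BB_def by (simp add: sum_3 split_beta)
  have f_X12: "\<And>p. p \<in> P \<Longrightarrow> dtt 1 2 p = (tt 1 1 p * dtt 1 2 p + tt 2 1 p * dtt 2 2 p + tt 3 1 p * dtt 3 2 p) * tt 1 1 p + (tt 1 2 p * dtt 1 2 p + tt 2 2 p * dtt 2 2 p + tt 3 2 p * dtt 3 2 p) * tt 1 2 p + (tt 1 3 p * dtt 1 2 p + tt 2 3 p * dtt 2 2 p + tt 3 3 p * dtt 3 2 p) * tt 1 3 p"
    using ED[of _ 1 2] unfolding tt_def AA_def BB_def by (simp add: sum_3 split_beta)
  have f_X13: "\<And>p. p \<in> P \<Longrightarrow> dtt 1 3 p = (tt 1 1 p * dtt 1 3 p + tt 2 1 p * dtt 2 3 p + tt 3 1 p * dtt 3 3 p) * tt 1 1 p + (tt 1 2 p * dtt 1 3 p + tt 2 2 p * dtt 2 3 p + tt 3 2 p * dtt 3 3 p) * tt 1 2 p + (tt 1 3 p * dtt 1 3 p + tt 2 3 p * dtt 2 3 p + tt 3 3 p * dtt 3 3 p) * tt 1 3 p"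
    using ED[of _ 1 3] unfolding tt_def AA_def BB_def by (simp add: sum_3 split_beta)
  have f_X21: "\<And>p. p \<in> P \<Longrightarrow> dtt 2 1 p = (tt 1 1 p * dtt 1 1 p + tt 2 1 p * dtt 2 1 p + tt 3 1 p * dtt 3 1 p) * tt 2 1 p + (tt 1 2 p * dtt 1 1 p + tt 2 2 p * dtt 2 1 p + tt 3 2 p * dtt 3 1 p) * tt 2 2 p + (tt 1 3 p * dtt 1 1 p + tt 2 3 p * dtt 2 1 p + tt 3 3 p * dtt 3 1 p) * tt 2 3 p"
    using ED[of _ 2 1] unfolding tt_def AA_def BB_def by (simp add: sum_3 split_beta)
  have f_X22: "\<And>p. p \<in> P \<Longrightarrow> dtt 2 2 p = (tt 1 1 p * dtt 1 2 p + tt 2 1 p * dtt 2 2 p + tt 3 1 p * dtt 3 2 p) * tt 2 1 p + (tt 1 2 p * dtt 1 2 p + tt 2 2 p * dtt 2 2 p + tt 3 2 p * dtt 3 2 p) * tt 2 2 p + (tt 1 3 p * dtt 1 2 p + tt 2 3 p * dtt 2 2 p + tt 3 3 p * dtt 3 2 p) * tt 2 3 p"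
    using ED[of _ 2 2] unfolding tt_def AA_def BB_def by (simp add: sum_3 split_beta)
  have f_X23: "\<And>p. p \<in> P \<Longrightarrow> dtt 2 3 p = (tt 1 1 p * dtt 1 3 p + tt 2 1 p * dtt 2 3 p + tt 3 1 p * dtt 3 3 p) * tt 2 1 p + (tt 1 2 p * dtt 1 3 p + tt 2 2 p * dtt 2 3 p + tt 3 2 p * dtt 3 3 p) * tt 2 2 p + (tt 1 3 p * dtt 1 3 p + tt 2 3 p * dtt 2 3 p + tt 3 3 p * dtt 3 3 p) * tt 2 3 p"
    using ED[of _ 2 3] unfolding tt_def AA_def BB_def by (simp add: sum_3 split_beta)
  have f_X31: "\<And>p. p \<in> P \<Longrightarrow> dtt 3 1 p = (tt 1 1 p * dtt 1 1 p + tt 2 1 p * dtt 2 1 p + tt 3 1 p * dtt 3 1 p) * tt 3 1 p + (tt 1 2 p * dtt 1 1 p + tt 2 2 p * dtt 2 1 p + tt 3 2 p * dtt 3 1 p) * tt 3 2 p + (tt 1 3 p * dtt 1 1 p + tt 2 3 p * dtt 2 1 p + tt 3 3 p * dtt 3 1 p) * tt 3 3 p"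
    using ED[of _ 3 1] unfolding tt_def AA_def BB_def by (simp add: sum_3 split_beta)
  have f_X32: "\<And>p. p \<in> P \<Longrightarrow> dtt 3 2 p = (tt 1 1 p * dtt 1 2 p + tt 2 1 p * dtt 2 2 p + tt 3 1 p * dtt 3 2 p) * tt 3 1 p + (tt 1 2 p * dtt 1 2 p + tt 2 2 p * dtt 2 2 p + tt 3 2 p * dtt 3 2 p) * tt 3 2 p + (tt 1 3 p * dtt 1 2 p + tt 2 3 p * dtt 2 2 p + tt 3 3 p * dtt 3 2 p) * tt 3 3 p"
    using ED[of _ 3 2] unfolding tt_def AA_def BB_def by (simp add: sum_3 split_beta)
  have f_X33: "\<And>p. p \<in> P \<Longrightarrow> dtt 3 3 p = (tt 1 1 p * dtt 1 3 p + tt 2 1 p * dtt 2 3 p + tt 3 1 p * dtt 3 3 p) * tt 3 1 p + (tt 1 2 p * dtt 1 3 p + tt 2 2 p * dtt 2 3 p + tt 3 2 p * dtt 3 3 p) * tt 3 2 p + (tt 1 3 p * dtt 1 3 p + tt 2 3 p * dtt 2 3 p + tt 3 3 p * dtt 3 3 p) * tt 3 3 p"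
    using ED[of _ 3 3] unfolding tt_def AA_def BB_def by (simp add: sum_3 split_beta)
  interpret BC: bnd_ctx P s tt dtt AA BB A1 B1 LL Ka Kb
    by unfold_locales (assumption | rule f_sp f_hA f_hB f_hA1 f_hB1 f_hT11 f_hT21 f_hT31 f_hT12 f_hT22 f_hT32 f_hT13 f_hT23 f_hT33 f_g12 f_g13 f_g23 f_K12 f_K21 f_K13 f_K31 f_K23 f_K32 f_U1 f_U2 f_U3 f_X11 f_X12 f_X13 f_X21 f_X22 f_X23 f_X31 f_X32 f_X33)+
  define CF where "CF = (\<lambda>i j p. tt 1 i p * (AA p * tt 2 j p + BB p * tt 3 j p) + tt 2 i p * tt 1 j p + tt 3 i p * tt 2 j p)"
  define DFX where "DFX = (\<lambda>i j p. dtt 1 i p * (AA p * tt 2 j p + BB p * tt 3 j p) + tt 1 i p * (A1 p * tt 2 j p + AA p * dtt 2 j p + B1 p * tt 3 j p + BB p * dtt 3 j p) + dtt 2 i p * tt 1 j p + tt 2 i p * dtt 1 j p + dtt 3 i p * tt 2 j p + tt 3 i p * dtt 2 j p)"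
  have cEq: "calA (AA p) (BB p) $ i $ j = CF i j p" if "p \<in> P" for p i j
    using calA_entry[OF Pg[OF that]] unfolding CF_def tt_def by simp
  have dEq: "((\<lambda>y. calA (a (fst p) y) (b (fst p) y) $ i $ j) has_real_derivative DFX i j p) (at (snd p))"
    if p: "p \<in> P" for p i j
  proof -
    let ?T = "\<lambda>m k y. Tmat (a (fst p) y) (b (fst p) y) $ m $ k"
    have hD: "((\<lambda>y. ?T 1 i y * (a (fst p) y * ?T 2 j y + b (fst p) y * ?T 3 j y) + ?T 2 i y * ?T 1 j y + ?T 3 i y * ?T 2 j y)
       has_real_derivative DFX i j p) (at (snd p))"
      by (rule derivative_eq_intros dT[OF p] dA[OF p] dB[OF p] refl)+
         (simp add: DFX_def tt_def AA_def BB_def algebra_simps)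
    have heq: "y \<in> Gp p \<Longrightarrow> ?T 1 i y * (a (fst p) y * ?T 2 j y + b (fst p) y * ?T 3 j y) + ?T 2 i y * ?T 1 j y + ?T 3 i y * ?T 2 j y
       = calA (a (fst p) y) (b (fst p) y) $ i $ j" for y
      using calA_entry loc[OF p] by auto
    show ?thesis
      using loc[OF p] by (intro has_field_derivative_transform_within_open[OF hD, of "Gp p"]) (auto simp: heq)
  qed
  obtain c11 where c11: "c11 \<ge> 0" "\<forall>p\<in>P. \<bar>CF 1 1 p\<bar> \<le> c11 * s p ^ 1"
    using BC.ubd_get[OF BC.cA11] unfolding CF_def by blast
  obtain c12 where c12: "c12 \<ge> 0" "\<forall>p\<in>P. \<bar>CF 1 2 p\<bar> \<le> c12 * s p ^ 0"
    using BC.ubd_get[OF BC.cA12] unfolding CF_def by blast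
  obtain c13 where c13: "c13 \<ge> 0" "\<forall>p\<in>P. \<bar>CF 1 3 p\<bar> \<le> c13 * s p ^ 1"
    using BC.ubd_get[OF BC.cA13] unfolding CF_def by blast
  obtain c21 where c21: "c21 \<ge> 0" "\<forall>p\<in>P. \<bar>CF 2 1 p\<bar> \<le> c21 * s p ^ 2"
    using BC.ubd_get[OF BC.cA21] unfolding CF_def by blast
  obtain c22 where c22: "c22 \<ge> 0" "\<forall>p\<in>P. \<bar>CF 2 2 p\<bar> \<le> c22 * s p ^ 1"
    using BC.ubd_get[OF BC.cA22] unfolding CF_def by blast
  obtain c23 where c23: "c23 \<ge> 0" "\<forall>p\<in>P. \<bar>CF 2 3 p\<bar> \<le> c23 * s p ^ 0"
    using BC.ubd_get[OF BC.cA23] unfolding CF_def by blast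
  obtain c31 where c31: "c31 \<ge> 0" "\<forall>p\<in>P. \<bar>CF 3 1 p\<bar> \<le> c31 * s p ^ 3"
    using BC.ubd_get[OF BC.cA31] unfolding CF_def by blast
  obtain c32 where c32: "c32 \<ge> 0" "\<forall>p\<in>P. \<bar>CF 3 2 p\<bar> \<le> c32 * s p ^ 2"
    using BC.ubd_get[OF BC.cA32] unfolding CF_def by blast
  obtain c33 where c33: "c33 \<ge> 0" "\<forall>p\<in>P. \<bar>CF 3 3 p\<bar> \<le> c33 * s p ^ 5"
    using BC.ubd_get[OF BC.cA33] unfolding CF_def by blast
  obtain e11 where e11: "e11 \<ge> 0" "\<forall>p\<in>P. \<bar>DFX 1 1 p\<bar> \<le> e11 * s p ^ 0"
    using BC.ubd_get[OF BC.dA11] unfolding DFX_def by blast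
  obtain e12 where e12: "e12 \<ge> 0" "\<forall>p\<in>P. \<bar>s p * DFX 1 2 p\<bar> \<le> e12 * s p ^ 0"
    using BC.ubd_get[OF BC.dA12] unfolding DFX_def by blast
  obtain e13 where e13: "e13 \<ge> 0" "\<forall>p\<in>P. \<bar>DFX 1 3 p\<bar> \<le> e13 * s p ^ 0"
    using BC.ubd_get[OF BC.dA13] unfolding DFX_def by blast
  obtain e21 where e21: "e21 \<ge> 0" "\<forall>p\<in>P. \<bar>DFX 2 1 p\<bar> \<le> e21 * s p ^ 1"
    using BC.ubd_get[OF BC.dA21] unfolding DFX_def by blast
  obtain e22 where e22: "e22 \<ge> 0" "\<forall>p\<in>P. \<bar>DFX 2 2 p\<bar> \<le> e22 * s p ^ 0"
    using BC.ubd_get[OF BC.dA22] unfolding DFX_def by blast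
  obtain e23 where e23: "e23 \<ge> 0" "\<forall>p\<in>P. \<bar>s p * DFX 2 3 p\<bar> \<le> e23 * s p ^ 0"
    using BC.ubd_get[OF BC.dA23] unfolding DFX_def by blast
  obtain e31 where e31: "e31 \<ge> 0" "\<forall>p\<in>P. \<bar>DFX 3 1 p\<bar> \<le> e31 * s p ^ 2"
    using BC.ubd_get[OF BC.dA31] unfolding DFX_def by blast
  obtain e32 where e32: "e32 \<ge> 0" "\<forall>p\<in>P. \<bar>DFX 3 2 p\<bar> \<le> e32 * s p ^ 1"
    using BC.ubd_get[OF BC.dA32] unfolding DFX_def by blast
  obtain e33 where e33: "e33 \<ge> 0" "\<forall>p\<in>P. \<bar>DFX 3 3 p\<bar> \<le> e33 * s p ^ 1"
    using BC.ubd_get[OF BC.dA33] unfolding DFX_def by blast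
  define C where "C = 1 + c11 + c12 + c13 + c21 + c22 + c23 + c31 + c32 + c33 + e11 + e12 + e13 + e21 + e22 + e23 + e31 + e32 + e33"
  have C_c11: "c11 \<le> C" unfolding C_def using c11(1) c12(1) c13(1) c21(1) c22(1) c23(1) c31(1) c32(1) c33(1) e11(1) e12(1) e13(1) e21(1) e22(1) e23(1) e31(1) e32(1) e33(1) by linarith
  have C_c12: "c12 \<le> C" unfolding C_def using c11(1) c12(1) c13(1) c21(1) c22(1) c23(1) c31(1) c32(1) c33(1) e11(1) e12(1) e13(1) e21(1) e22(1) e23(1) e31(1) e32(1) e33(1) by linarith
  have C_c13: "c13 \<le> C" unfolding C_def using c11(1) c12(1) c13(1) c21(1) c22(1) c23(1) c31(1) c32(1) c33(1) e11(1) e12(1) e13(1) e21(1) e22(1) e23(1) e31(1) e32(1) e33(1) by linarith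
  have C_c21: "c21 \<le> C" unfolding C_def using c11(1) c12(1) c13(1) c21(1) c22(1) c23(1) c31(1) c32(1) c33(1) e11(1) e12(1) e13(1) e21(1) e22(1) e23(1) e31(1) e32(1) e33(1) by linarith
  have C_c22: "c22 \<le> C" unfolding C_def using c11(1) c12(1) c13(1) c21(1) c22(1) c23(1) c31(1) c32(1) c33(1) e11(1) e12(1) e13(1) e21(1) e22(1) e23(1) e31(1) e32(1) e33(1) by linarith
  have C_c23: "c23 \<le> C" unfolding C_def using c11(1) c12(1) c13(1) c21(1) c22(1) c23(1) c31(1) c32(1) c33(1) e11(1) e12(1) e13(1) e21(1) e22(1) e23(1) e31(1) e32(1) e33(1) by linarith
  have C_c31: "c31 \<le> C" unfolding C_def using c11(1) c12(1) c13(1) c21(1) c22(1) c23(1) c31(1) c32(1) c33(1) e11(1) e12(1) e13(1) e21(1) e22(1) e23(1) e31(1) e32(1) e33(1) by linarith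
  have C_c32: "c32 \<le> C" unfolding C_def using c11(1) c12(1) c13(1) c21(1) c22(1) c23(1) c31(1) c32(1) c33(1) e11(1) e12(1) e13(1) e21(1) e22(1) e23(1) e31(1) e32(1) e33(1) by linarith
  have C_c33: "c33 \<le> C" unfolding C_def using c11(1) c12(1) c13(1) c21(1) c22(1) c23(1) c31(1) c32(1) c33(1) e11(1) e12(1) e13(1) e21(1) e22(1) e23(1) e31(1) e32(1) e33(1) by linarith
  have C_e11: "e11 \<le> C" unfolding C_def using c11(1) c12(1) c13(1) c21(1) c22(1) c23(1) c31(1) c32(1) c33(1) e11(1) e12(1) e13(1) e21(1) e22(1) e23(1) e31(1) e32(1) e33(1) by linarith
  have C_e12: "e12 \<le> C" unfolding C_def using c11(1) c12(1) c13(1) c21(1) c22(1) c23(1) c31(1) c32(1) c33(1) e11(1) e12(1) e13(1) e21(1) e22(1) e23(1) e31(1) e32(1) e33(1) by linarith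
  have C_e13: "e13 \<le> C" unfolding C_def using c11(1) c12(1) c13(1) c21(1) c22(1) c23(1) c31(1) c32(1) c33(1) e11(1) e12(1) e13(1) e21(1) e22(1) e23(1) e31(1) e32(1) e33(1) by linarith
  have C_e21: "e21 \<le> C" unfolding C_def using c11(1) c12(1) c13(1) c21(1) c22(1) c23(1) c31(1) c32(1) c33(1) e11(1) e12(1) e13(1) e21(1) e22(1) e23(1) e31(1) e32(1) e33(1) by linarith
  have C_e22: "e22 \<le> C" unfolding C_def using c11(1) c12(1) c13(1) c21(1) c22(1) c23(1) c31(1) c32(1) c33(1) e11(1) e12(1) e13(1) e21(1) e22(1) e23(1) e31(1) e32(1) e33(1) by linarith
  have C_e23: "e23 \<le> C" unfolding C_def using c11(1) c12(1) c13(1) c21(1) c22(1) c23(1) c31(1) c32(1) c33(1) e11(1) e12(1) e13(1) e21(1) e22(1) e23(1) e31(1) e32(1) e33(1) by linarith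
  have C_e31: "e31 \<le> C" unfolding C_def using c11(1) c12(1) c13(1) c21(1) c22(1) c23(1) c31(1) c32(1) c33(1) e11(1) e12(1) e13(1) e21(1) e22(1) e23(1) e31(1) e32(1) e33(1) by linarith
  have C_e32: "e32 \<le> C" unfolding C_def using c11(1) c12(1) c13(1) c21(1) c22(1) c23(1) c31(1) c32(1) c33(1) e11(1) e12(1) e13(1) e21(1) e22(1) e23(1) e31(1) e32(1) e33(1) by linarith
  have C_e33: "e33 \<le> C" unfolding C_def using c11(1) c12(1) c13(1) c21(1) c22(1) c23(1) c31(1) c32(1) c33(1) e11(1) e12(1) e13(1) e21(1) e22(1) e23(1) e31(1) e32(1) e33(1) by linarith
  have Cpos: "C > 0" unfolding C_def using c11(1) c12(1) c13(1) c21(1) c22(1) c23(1) c31(1) c32(1) c33(1) e11(1) e12(1) e13(1) e21(1) e22(1) e23(1) e31(1) e32(1) e33(1) by linarith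
  have leC: "\<bar>X\<bar> \<le> C * S" if "\<bar>X\<bar> \<le> c * S" "0 \<le> S" "c \<le> C" for X S c :: real
    using that by (smt (verit) mult_right_mono)
  have main: "let M = calA (a t x) (b t x);
           Mx = (\<lambda>i j g. \<exists>D. ((\<lambda>y. calA (a t y) (b t y) $ i $ j) has_real_derivative D) (at x)
                                \<and> \<bar>D\<bar> \<le> C * g);
           A = a t x
       in card (eigvals (Smat (a t x) (b t x))) = 3 \<and>
          \<bar>M$1$1\<bar> \<le> C * sqrt A \<and> \<bar>M$1$2\<bar> \<le> C \<and> \<bar>M$1$3\<bar> \<le> C * sqrt A \<and>
          \<bar>M$2$1\<bar> \<le> C * A \<and> \<bar>M$2$2\<bar> \<le> C * sqrt A \<and> \<bar>M$2$3\<bar> \<le> C \<and>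
          \<bar>M$3$1\<bar> \<le> C * A powr (3/2) \<and> \<bar>M$3$2\<bar> \<le> C * A \<and> \<bar>M$3$3\<bar> \<le> C * A powr (5/2) \<and>
          Mx 1 1 1 \<and> Mx 1 2 (1 / sqrt A) \<and> Mx 1 3 1 \<and>
          Mx 2 1 (sqrt A) \<and> Mx 2 2 1 \<and> Mx 2 3 (1 / sqrt A) \<and>
          Mx 3 1 A \<and> Mx 3 2 (sqrt A) \<and> Mx 3 3 (sqrt A)"
    if tx: "(t,x) \<in> U" "t > 0" for t x
  proof -
    define p where "p = (t,x)"
    have p: "p \<in> P" using tx unfolding P_def p_def by auto
    have sp: "s p = sqrt (a t x)" "AA p = a t x" "BB p = b t x" unfolding s_def p_def AA_def BB_def by auto
    have ap: "a t x > 0" using Pg[OF p] sp by (simp add: good_def)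
    note pw = spow[OF ap]
    have s0: "0 \<le> sqrt (a t x)" using ap by simp
    have card: "card (eigvals (Smat (a t x) (b t x))) = 3" using good_struct(12)[OF Pg[OF p]] sp by simp
    have cE: "calA (a t x) (b t x) $ i $ j = CF i j p" for i j using cEq[OF p, of i j] sp by simp
    have dE: "((\<lambda>y. calA (a t y) (b t y) $ i $ j) has_real_derivative DFX i j p) (at x)" for i j
      using dEq[OF p, of i j] unfolding p_def by simp
    have M11: "\<bar>calA (a t x) (b t x) $ 1 $ 1\<bar> \<le> C * sqrt (a t x)"
    proof -
      have "\<bar>CF 1 1 p\<bar> \<le> c11 * s p ^ 1" using c11(2) p by blast
      hence "\<bar>CF 1 1 p\<bar> \<le> c11 * (sqrt (a t x))" unfolding sp using pw by simp
      thus ?thesis unfolding cE by (rule leC) (use C_c11 ap in auto)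
    qed
    have M12: "\<bar>calA (a t x) (b t x) $ 1 $ 2\<bar> \<le> C * 1"
    proof -
      have "\<bar>CF 1 2 p\<bar> \<le> c12 * s p ^ 0" using c12(2) p by blast
      hence "\<bar>CF 1 2 p\<bar> \<le> c12 * (1)" unfolding sp using pw by simp
      thus ?thesis unfolding cE by (rule leC) (use C_c12 ap in auto)
    qed
    have M13: "\<bar>calA (a t x) (b t x) $ 1 $ 3\<bar> \<le> C * sqrt (a t x)"
    proof -
      have "\<bar>CF 1 3 p\<bar> \<le> c13 * s p ^ 1" using c13(2) p by blast
      hence "\<bar>CF 1 3 p\<bar> \<le> c13 * (sqrt (a t x))" unfolding sp using pw by simp
      thus ?thesis unfolding cE by (rule leC) (use C_c13 ap in auto)
    qed
    have M21: "\<bar>calA (a t x) (b t x) $ 2 $ 1\<bar> \<le> C * a t x"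
    proof -
      have "\<bar>CF 2 1 p\<bar> \<le> c21 * s p ^ 2" using c21(2) p by blast
      hence "\<bar>CF 2 1 p\<bar> \<le> c21 * (a t x)" unfolding sp using pw by simp
      thus ?thesis unfolding cE by (rule leC) (use C_c21 ap in auto)
    qed
    have M22: "\<bar>calA (a t x) (b t x) $ 2 $ 2\<bar> \<le> C * sqrt (a t x)"
    proof -
      have "\<bar>CF 2 2 p\<bar> \<le> c22 * s p ^ 1" using c22(2) p by blast
      hence "\<bar>CF 2 2 p\<bar> \<le> c22 * (sqrt (a t x))" unfolding sp using pw by simp
      thus ?thesis unfolding cE by (rule leC) (use C_c22 ap in auto)
    qed
    have M23: "\<bar>calA (a t x) (b t x) $ 2 $ 3\<bar> \<le> C * 1"
    proof -
      have "\<bar>CF 2 3 p\<bar> \<le> c23 * s p ^ 0" using c23(2) p by blast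
      hence "\<bar>CF 2 3 p\<bar> \<le> c23 * (1)" unfolding sp using pw by simp
      thus ?thesis unfolding cE by (rule leC) (use C_c23 ap in auto)
    qed
    have M31: "\<bar>calA (a t x) (b t x) $ 3 $ 1\<bar> \<le> C * a t x powr (3/2)"
    proof -
      have "\<bar>CF 3 1 p\<bar> \<le> c31 * s p ^ 3" using c31(2) p by blast
      hence "\<bar>CF 3 1 p\<bar> \<le> c31 * (a t x powr (3/2))" unfolding sp using pw by simp
      thus ?thesis unfolding cE by (rule leC) (use C_c31 ap in auto)
    qed
    have M32: "\<bar>calA (a t x) (b t x) $ 3 $ 2\<bar> \<le> C * a t x"
    proof -
      have "\<bar>CF 3 2 p\<bar> \<le> c32 * s p ^ 2" using c32(2) p by blast
      hence "\<bar>CF 3 2 p\<bar> \<le> c32 * (a t x)" unfolding sp using pw by simp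
      thus ?thesis unfolding cE by (rule leC) (use C_c32 ap in auto)
    qed
    have M33: "\<bar>calA (a t x) (b t x) $ 3 $ 3\<bar> \<le> C * a t x powr (5/2)"
    proof -
      have "\<bar>CF 3 3 p\<bar> \<le> c33 * s p ^ 5" using c33(2) p by blast
      hence "\<bar>CF 3 3 p\<bar> \<le> c33 * (a t x powr (5/2))" unfolding sp using pw by simp
      thus ?thesis unfolding cE by (rule leC) (use C_c33 ap in auto)
    qed
    have X11: "\<exists>D. ((\<lambda>y. calA (a t y) (b t y) $ 1 $ 1) has_real_derivative D) (at x) \<and> \<bar>D\<bar> \<le> C * (1)"
    proof (intro exI conjI)
      show "((\<lambda>y. calA (a t y) (b t y) $ 1 $ 1) has_real_derivative DFX 1 1 p) (at x)" by (rule dE)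
      have "\<bar>DFX 1 1 p\<bar> \<le> e11 * s p ^ 0" using e11(2) p by blast
      hence "\<bar>DFX 1 1 p\<bar> \<le> e11 * (1)" unfolding sp using pw by simp
      thus "\<bar>DFX 1 1 p\<bar> \<le> C * (1)" by (rule leC) (use C_e11 ap in auto)
    qed
    have X12: "\<exists>D. ((\<lambda>y. calA (a t y) (b t y) $ 1 $ 2) has_real_derivative D) (at x) \<and> \<bar>D\<bar> \<le> C * (1 / sqrt (a t x))"
    proof (intro exI conjI)
      show "((\<lambda>y. calA (a t y) (b t y) $ 1 $ 2) has_real_derivative DFX 1 2 p) (at x)" by (rule dE)
      have "\<bar>s p * DFX 1 2 p\<bar> \<le> e12 * s p ^ 0" using e12(2) p by blast
      hence "sqrt (a t x) * \<bar>DFX 1 2 p\<bar> \<le> e12" unfolding sp using s0 by (simp add: abs_mult)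
      hence "\<bar>DFX 1 2 p\<bar> \<le> e12 * (1 / sqrt (a t x))" using ap by (simp add: field_simps)
      thus "\<bar>DFX 1 2 p\<bar> \<le> C * (1 / sqrt (a t x))" by (rule leC) (use C_e12 ap in auto)
    qed
    have X13: "\<exists>D. ((\<lambda>y. calA (a t y) (b t y) $ 1 $ 3) has_real_derivative D) (at x) \<and> \<bar>D\<bar> \<le> C * (1)"
    proof (intro exI conjI)
      show "((\<lambda>y. calA (a t y) (b t y) $ 1 $ 3) has_real_derivative DFX 1 3 p) (at x)" by (rule dE)
      have "\<bar>DFX 1 3 p\<bar> \<le> e13 * s p ^ 0" using e13(2) p by blast
      hence "\<bar>DFX 1 3 p\<bar> \<le> e13 * (1)" unfolding sp using pw by simp
      thus "\<bar>DFX 1 3 p\<bar> \<le> C * (1)" by (rule leC) (use C_e13 ap in auto)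
    qed
    have X21: "\<exists>D. ((\<lambda>y. calA (a t y) (b t y) $ 2 $ 1) has_real_derivative D) (at x) \<and> \<bar>D\<bar> \<le> C * (sqrt (a t x))"
    proof (intro exI conjI)
      show "((\<lambda>y. calA (a t y) (b t y) $ 2 $ 1) has_real_derivative DFX 2 1 p) (at x)" by (rule dE)
      have "\<bar>DFX 2 1 p\<bar> \<le> e21 * s p ^ 1" using e21(2) p by blast
      hence "\<bar>DFX 2 1 p\<bar> \<le> e21 * (sqrt (a t x))" unfolding sp using pw by simp
      thus "\<bar>DFX 2 1 p\<bar> \<le> C * (sqrt (a t x))" by (rule leC) (use C_e21 ap in auto)
    qed
    have X22: "\<exists>D. ((\<lambda>y. calA (a t y) (b t y) $ 2 $ 2) has_real_derivative D) (at x) \<and> \<bar>D\<bar> \<le> C * (1)"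
    proof (intro exI conjI)
      show "((\<lambda>y. calA (a t y) (b t y) $ 2 $ 2) has_real_derivative DFX 2 2 p) (at x)" by (rule dE)
      have "\<bar>DFX 2 2 p\<bar> \<le> e22 * s p ^ 0" using e22(2) p by blast
      hence "\<bar>DFX 2 2 p\<bar> \<le> e22 * (1)" unfolding sp using pw by simp
      thus "\<bar>DFX 2 2 p\<bar> \<le> C * (1)" by (rule leC) (use C_e22 ap in auto)
    qed
    have X23: "\<exists>D. ((\<lambda>y. calA (a t y) (b t y) $ 2 $ 3) has_real_derivative D) (at x) \<and> \<bar>D\<bar> \<le> C * (1 / sqrt (a t x))"
    proof (intro exI conjI)
      show "((\<lambda>y. calA (a t y) (b t y) $ 2 $ 3) has_real_derivative DFX 2 3 p) (at x)" by (rule dE)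
      have "\<bar>s p * DFX 2 3 p\<bar> \<le> e23 * s p ^ 0" using e23(2) p by blast
      hence "sqrt (a t x) * \<bar>DFX 2 3 p\<bar> \<le> e23" unfolding sp using s0 by (simp add: abs_mult)
      hence "\<bar>DFX 2 3 p\<bar> \<le> e23 * (1 / sqrt (a t x))" using ap by (simp add: field_simps)
      thus "\<bar>DFX 2 3 p\<bar> \<le> C * (1 / sqrt (a t x))" by (rule leC) (use C_e23 ap in auto)
    qed
    have X31: "\<exists>D. ((\<lambda>y. calA (a t y) (b t y) $ 3 $ 1) has_real_derivative D) (at x) \<and> \<bar>D\<bar> \<le> C * (a t x)"
    proof (intro exI conjI)
      show "((\<lambda>y. calA (a t y) (b t y) $ 3 $ 1) has_real_derivative DFX 3 1 p) (at x)" by (rule dE)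
      have "\<bar>DFX 3 1 p\<bar> \<le> e31 * s p ^ 2" using e31(2) p by blast
      hence "\<bar>DFX 3 1 p\<bar> \<le> e31 * (a t x)" unfolding sp using pw by simp
      thus "\<bar>DFX 3 1 p\<bar> \<le> C * (a t x)" by (rule leC) (use C_e31 ap in auto)
    qed
    have X32: "\<exists>D. ((\<lambda>y. calA (a t y) (b t y) $ 3 $ 2) has_real_derivative D) (at x) \<and> \<bar>D\<bar> \<le> C * (sqrt (a t x))"
    proof (intro exI conjI)
      show "((\<lambda>y. calA (a t y) (b t y) $ 3 $ 2) has_real_derivative DFX 3 2 p) (at x)" by (rule dE)
      have "\<bar>DFX 3 2 p\<bar> \<le> e32 * s p ^ 1" using e32(2) p by blast
      hence "\<bar>DFX 3 2 p\<bar> \<le> e32 * (sqrt (a t x))" unfolding sp using pw by simp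
      thus "\<bar>DFX 3 2 p\<bar> \<le> C * (sqrt (a t x))" by (rule leC) (use C_e32 ap in auto)
    qed
    have X33: "\<exists>D. ((\<lambda>y. calA (a t y) (b t y) $ 3 $ 3) has_real_derivative D) (at x) \<and> \<bar>D\<bar> \<le> C * (sqrt (a t x))"
    proof (intro exI conjI)
      show "((\<lambda>y. calA (a t y) (b t y) $ 3 $ 3) has_real_derivative DFX 3 3 p) (at x)" by (rule dE)
      have "\<bar>DFX 3 3 p\<bar> \<le> e33 * s p ^ 1" using e33(2) p by blast
      hence "\<bar>DFX 3 3 p\<bar> \<le> e33 * (sqrt (a t x))" unfolding sp using pw by simp
      thus "\<bar>DFX 3 3 p\<bar> \<le> C * (sqrt (a t x))" by (rule leC) (use C_e33 ap in auto)
    qed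
    show ?thesis unfolding Let_def
      using card M11 M12 M13 M21 M22 M23 M31 M32 M33 X11 X12 X13 X21 X22 X23 X31 X32 X33 by simp
  qed
  show ?thesis
    by (rule exI[of _ U], rule exI[of _ C]) (use oU U0 Cpos main in auto)
qed

end
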